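(* Under the standing assumptions below, let $(x^\star,\lambda^\star,s^\star)$ be an optimal primal-dual solution, let $\epsilon>0$, and let $\zeta>0$ satisfy $\|(x^\star,s^\star)\|\le\zeta$ and $\zeta^2\le\chi/\epsilon^\kappa$ for some constants $\chi,\kappa>0$. Run Algorithm IIPM from $(x^0,\lambda^0,s^0)=(\zeta e,0,\zeta e)$. Then there is an index $K=O(n^2|\log\epsilon|)$ such that the iterates satisfy $\mu^k\le\epsilon$ for all $k\ge K$.
   Context: Standing assumptions: $Q\in\mathbb{S}^{n+1}$ (real symmetric), $q\in\mathbb{R}^{n+1}$, $A\in\mathbb{R}^{m\times(n+1)}$ has full row rank $m$, and $x^TQx>0$ for every nonzero $x$ with $Ax=0$; the problem is $\min\{\tfrac12x^TQx+q^Tx : Ax=0,\ x\ge0\}$. An optimal primal-dual solution is $(x^\star,\lambda^\star,s^\star)$ with $Qx^\star+q+A^T\lambda^\star-s^\star=0$, $Ax^\star=0$, $x^\star,s^\star\ge0$, $(x^\star)^Ts^\star=0$. $e\in\mathbb{R}^{n+1}$ is the all-ones vector, $X=\mathrm{Diag}(x)$, $S=\mathrm{Diag}(s)$. Residuals: $r_d(x,\lambda,s)=Qx+q+A^T\lambda-s$, $r_p(x,\lambda,s)=Ax$, $r_c(x,\lambda,s)=Xs$, and $\mu(x,s)=x^Ts/(n+1)$; write $r_d^k,r_p^k,r_c^k,\mu^k$ for their values at the $k$-th iterate. Neighborhood, for parameters $\gamma\in(0,1)$, $\beta\ge1$: $\mathcal N_{-\infty}(\gamma,\beta)=\{(x,\lambda,s):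 \|(r_d,r_p)\|/\mu\le\beta\|(r_d^0,r_p^0)\|/\mu^0,\ (x,s)>0,\ Xs\ge\gamma\mu(x,s)e\}$. Algorithm IIPM (parameters $\beta\ge1$, $\gamma\in(0,1)$, $0<\sigma^{\min}<\sigma^{\max}\le\tfrac12$): starting from $(x^0,s^0)>0$, at iteration $k$ choose $\sigma^k\in[\sigma^{\min},\sigma^{\max}]$, compute $(\Delta x^k,\Delta\lambda^k,\Delta s^k)$ solving $Q\Delta x+A^T\Delta\lambda-\Delta s=-r_d^k$, $A\Delta x=-r_p^k$, $S^k\Delta x+X^k\Delta s=-r_c^k+\sigma^k\mu^ke$; then choose $\alpha^k$ as the largest $\alpha\in(0,1]$ such that $(x^k,\lambda^k,s^k)+\alpha(\Delta x^k,\Delta\lambda^k,\Delta s^k)\in\mathcal N_{-\infty}(\gamma,\beta)$ and $\mu(x^k+\alpha\Delta x^k,s^k+\alpha\Delta s^k)\le(1-0.01\alpha)\mu^k$; set the next iterate to $(x^k,\lambda^k,s^k)+\alpha^k(\Delta x^k,\Delta\lambda^k,\Delta s^k)$. The constant in $O(\cdot)$ depends on $\chi,\kappa,\beta,\gamma,\sigma^{\min},\sigma^{\max}$ but not on $n$ or $\epsilon$. *)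

theory Defs
  imports Complex_Main
begin

text \<open>Explicit-dimension encoding: the problem dimension is n+1, vectors in R^(n+1)
  are functions nat => real read on indices {..n}; vectors in R^m are read on {..<m};
  matrices are nat => nat => real (Q on {..n}x{..n}, A on {..<m}x{..n}).\<close>

definition quad :: "nat \<Rightarrow> (nat \<Rightarrow> nat \<Rightarrow> real) \<Rightarrow> (nat \<Rightarrow> real) \<Rightarrow> real" where
  "quad n Q x = (\<Sum>i\<le>n. \<Sum>j\<le>n. x i * Q i j * x j)"

definition Amul :: "nat \<Rightarrow> (nat \<Rightarrow> nat \<Rightarrow> real) \<Rightarrow> (nat \<Rightarrow> real) \<Rightarrow> nat \<Rightarrow> real" where
  "Amul n A x = (\<lambda>k. \<Sum>j\<le>n. A k j * x j)"

definition standing_assms ::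
  "nat \<Rightarrow> nat \<Rightarrow> (nat \<Rightarrow> nat \<Rightarrow> real) \<Rightarrow> (nat \<Rightarrow> nat \<Rightarrow> real) \<Rightarrow> bool" where
  "standing_assms n m Q A \<longleftrightarrow>
     (\<forall>i\<le>n. \<forall>j\<le>n. Q i j = Q j i) \<and>
     \<comment> \<open>A has full row rank m: its m rows are linearly independent\<close>
     (\<forall>y::nat \<Rightarrow> real. (\<forall>j\<le>n. (\<Sum>k<m. y k * A k j) = 0) \<longrightarrow> (\<forall>k<m. y k = 0)) \<and>
     (\<forall>x. (\<forall>k<m. Amul n A x k = 0) \<and> (\<exists>j\<le>n. x j \<noteq> 0) \<longrightarrow> quad n Q x > 0)"

definition rd :: "nat \<Rightarrow> nat \<Rightarrow> (nat \<Rightarrow> nat \<Rightarrow> real) \<Rightarrow> (nat \<Rightarrow> real) \<Rightarrow> (nat \<Rightarrow> nat \<Rightarrow> real)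
    \<Rightarrow> (nat \<Rightarrow> real) \<Rightarrow> (nat \<Rightarrow> real) \<Rightarrow> (nat \<Rightarrow> real) \<Rightarrow> nat \<Rightarrow> real" where
  "rd n m Q q A x l s = (\<lambda>i. (\<Sum>j\<le>n. Q i j * x j) + q i + (\<Sum>k<m. A k i * l k) - s i)"

definition rp :: "nat \<Rightarrow> (nat \<Rightarrow> nat \<Rightarrow> real) \<Rightarrow> (nat \<Rightarrow> real) \<Rightarrow> nat \<Rightarrow> real" where
  "rp n A x = Amul n A x"

definition mu :: "nat \<Rightarrow> (nat \<Rightarrow> real) \<Rightarrow> (nat \<Rightarrow> real) \<Rightarrow> real" where
  "mu n x s = (\<Sum>i\<le>n. x i * s i) / real (n + 1)"

definition res_norm :: "nat \<Rightarrow> nat \<Rightarrow> (nat \<Rightarrow> nat \<Rightarrow> real) \<Rightarrow> (nat \<Rightarrow> real) \<Rightarrow> (nat \<Rightarrow> nat \<Rightarrow> real)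
    \<Rightarrow> (nat \<Rightarrow> real) \<Rightarrow> (nat \<Rightarrow> real) \<Rightarrow> (nat \<Rightarrow> real) \<Rightarrow> real" where
  "res_norm n m Q q A x l s =
     sqrt ((\<Sum>i\<le>n. (rd n m Q q A x l s i)\<^sup>2) + (\<Sum>k<m. (rp n A x k)\<^sup>2))"

definition optimal_pd :: "nat \<Rightarrow> nat \<Rightarrow> (nat \<Rightarrow> nat \<Rightarrow> real) \<Rightarrow> (nat \<Rightarrow> real) \<Rightarrow> (nat \<Rightarrow> nat \<Rightarrow> real)
    \<Rightarrow> (nat \<Rightarrow> real) \<Rightarrow> (nat \<Rightarrow> real) \<Rightarrow> (nat \<Rightarrow> real) \<Rightarrow> bool" where
  "optimal_pd n m Q q A x l s \<longleftrightarrow>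
     (\<forall>i\<le>n. rd n m Q q A x l s i = 0) \<and> (\<forall>k<m. rp n A x k = 0) \<and>
     (\<forall>i\<le>n. x i \<ge> 0 \<and> s i \<ge> 0) \<and> (\<Sum>i\<le>n. x i * s i) = 0"

definition in_nbhd :: "nat \<Rightarrow> nat \<Rightarrow> (nat \<Rightarrow> nat \<Rightarrow> real) \<Rightarrow> (nat \<Rightarrow> real) \<Rightarrow> (nat \<Rightarrow> nat \<Rightarrow> real)
    \<Rightarrow> real \<Rightarrow> real \<Rightarrow> (nat \<Rightarrow> real) \<Rightarrow> (nat \<Rightarrow> real) \<Rightarrow> (nat \<Rightarrow> real)
    \<Rightarrow> (nat \<Rightarrow> real) \<Rightarrow> (nat \<Rightarrow> real) \<Rightarrow> (nat \<Rightarrow> real) \<Rightarrow> bool" where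
  "in_nbhd n m Q q A \<gamma> \<beta> x0 l0 s0 x l s \<longleftrightarrow>
     res_norm n m Q q A x l s / mu n x s
        \<le> \<beta> * res_norm n m Q q A x0 l0 s0 / mu n x0 s0 \<and>
     (\<forall>i\<le>n. x i > 0 \<and> s i > 0) \<and>
     (\<forall>i\<le>n. x i * s i \<ge> \<gamma> * mu n x s)"

definition step_ok :: "nat \<Rightarrow> nat \<Rightarrow> (nat \<Rightarrow> nat \<Rightarrow> real) \<Rightarrow> (nat \<Rightarrow> real) \<Rightarrow> (nat \<Rightarrow> nat \<Rightarrow> real)
    \<Rightarrow> real \<Rightarrow> real \<Rightarrow> (nat \<Rightarrow> real) \<Rightarrow> (nat \<Rightarrow> real) \<Rightarrow> (nat \<Rightarrow> real)
    \<Rightarrow> (nat \<Rightarrow> real) \<Rightarrow> (nat \<Rightarrow> real) \<Rightarrow> (nat \<Rightarrow> real)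
    \<Rightarrow> (nat \<Rightarrow> real) \<Rightarrow> (nat \<Rightarrow> real) \<Rightarrow> (nat \<Rightarrow> real) \<Rightarrow> real \<Rightarrow> bool" where
  "step_ok n m Q q A \<gamma> \<beta> x0 l0 s0 x l s dx dl ds \<alpha> \<longleftrightarrow>
     0 < \<alpha> \<and> \<alpha> \<le> 1 \<and>
     in_nbhd n m Q q A \<gamma> \<beta> x0 l0 s0
       (\<lambda>i. x i + \<alpha> * dx i) (\<lambda>k. l k + \<alpha> * dl k) (\<lambda>i. s i + \<alpha> * ds i) \<and>
     mu n (\<lambda>i. x i + \<alpha> * dx i) (\<lambda>i. s i + \<alpha> * ds i) \<le> (1 - 0.01 * \<alpha>) * mu n x s"

definition newton_dir :: "nat \<Rightarrow> nat \<Rightarrow> (nat \<Rightarrow> nat \<Rightarrow> real) \<Rightarrow> (nat \<Rightarrow> real) \<Rightarrow> (nat \<Rightarrow> nat \<Rightarrow> real)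
    \<Rightarrow> real \<Rightarrow> (nat \<Rightarrow> real) \<Rightarrow> (nat \<Rightarrow> real) \<Rightarrow> (nat \<Rightarrow> real)
    \<Rightarrow> (nat \<Rightarrow> real) \<Rightarrow> (nat \<Rightarrow> real) \<Rightarrow> (nat \<Rightarrow> real) \<Rightarrow> bool" where
  "newton_dir n m Q q A \<sigma> x l s dx dl ds \<longleftrightarrow>
     (\<forall>i\<le>n. (\<Sum>j\<le>n. Q i j * dx j) + (\<Sum>k<m. A k i * dl k) - ds i = - rd n m Q q A x l s i) \<and>
     (\<forall>k<m. Amul n A dx k = - rp n A x k) \<and>
     (\<forall>i\<le>n. s i * dx i + x i * ds i = - (x i * s i) + \<sigma> * mu n x s)"

definition iipm_run :: "nat \<Rightarrow> nat \<Rightarrow> (nat \<Rightarrow> nat \<Rightarrow> real) \<Rightarrow> (nat \<Rightarrow> real) \<Rightarrow> (nat \<Rightarrow> nat \<Rightarrow> real)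
    \<Rightarrow> real \<Rightarrow> real \<Rightarrow> real \<Rightarrow> real
    \<Rightarrow> (nat \<Rightarrow> nat \<Rightarrow> real) \<Rightarrow> (nat \<Rightarrow> nat \<Rightarrow> real) \<Rightarrow> (nat \<Rightarrow> nat \<Rightarrow> real) \<Rightarrow> bool" where
  "iipm_run n m Q q A \<beta> \<gamma> \<sigma>min \<sigma>max x l s \<longleftrightarrow>
     (\<exists>\<sigma> dx dl ds \<alpha>. \<forall>k.
        \<sigma>min \<le> \<sigma> k \<and> \<sigma> k \<le> \<sigma>max \<and>
        newton_dir n m Q q A (\<sigma> k) (x k) (l k) (s k) (dx k) (dl k) (ds k) \<and>
        step_ok n m Q q A \<gamma> \<beta> (x 0) (l 0) (s 0) (x k) (l k) (s k) (dx k) (dl k) (ds k) (\<alpha> k) \<and>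
        (\<forall>a. step_ok n m Q q A \<gamma> \<beta> (x 0) (l 0) (s 0) (x k) (l k) (s k) (dx k) (dl k) (ds k) a
               \<longrightarrow> a \<le> \<alpha> k) \<and>
        x (Suc k) = (\<lambda>i. x k i + \<alpha> k * dx k i) \<and>
        l (Suc k) = (\<lambda>j. l k j + \<alpha> k * dl k j) \<and>
        s (Suc k) = (\<lambda>i. s k i + \<alpha> k * ds k i))"

end

theory Submission
  imports Defs
begin

lemma inner_nonneg:
  assumes sa: "standing_assms n m Q A"
    and Au: "\<forall>k<m. Amul n A u k = 0"
    and eq: "\<forall>i\<le>n. (\<Sum>j\<le>n. Q i j * u j) + (\<Sum>k<m. A k i * w k) - v i = 0"
  shows "0 \<le> (\<Sum>i\<le>n. u i * v i)"
proof -
  have "(\<Sum>i\<le>n. u i * v i) = (\<Sum>i\<le>n. u i * (\<Sum>j\<le>n. Q i j * u j)) + (\<Sum>i\<le>n. u i * (\<Sum>k<m. A k i * w k))"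
  proof -
    have "(\<Sum>i\<le>n. u i * v i) = (\<Sum>i\<le>n. u i * ((\<Sum>j\<le>n. Q i j * u j) + (\<Sum>k<m. A k i * w k)))"
    proof (rule sum.cong)
      fix i assume "i \<in> {..n}"
      then have "v i = (\<Sum>j\<le>n. Q i j * u j) + (\<Sum>k<m. A k i * w k)" using eq by force
      then show "u i * v i = u i * ((\<Sum>j\<le>n. Q i j * u j) + (\<Sum>k<m. A k i * w k))" by simp
    qed simp
    then show ?thesis by (simp add: distrib_left sum.distrib)
  qed
  also have "(\<Sum>i\<le>n. u i * (\<Sum>k<m. A k i * w k)) = (\<Sum>k<m. w k * Amul n A u k)"
    unfolding Amul_def sum_distrib_left by (subst sum.swap) (simp add: mult_ac)
  also have "\<dots> = 0" using Au by simp
  also have "(\<Sum>i\<le>n. u i * (\<Sum>j\<le>n. Q i j * u j)) = quad n Q u"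
    by (simp add: quad_def sum_distrib_left mult_ac)
  finally have e: "(\<Sum>i\<le>n. u i * v i) = quad n Q u" by simp
  show ?thesis
  proof (cases "\<exists>j\<le>n. u j \<noteq> 0")
    case True
    then have "quad n Q u > 0" using sa Au unfolding standing_assms_def by blast
    then show ?thesis using e by simp
  next
    case False
    then have "quad n Q u = 0" unfolding quad_def by simp
    then show ?thesis using e by simp
  qed
qed

lemma rd_step:
  assumes "newton_dir n m Q q A \<sigma> x l s dx dl ds" "i \<le> n"
  shows "rd n m Q q A (\<lambda>i. x i + \<alpha> * dx i) (\<lambda>k. l k + \<alpha> * dl k) (\<lambda>i. s i + \<alpha> * ds i) i
       = (1-\<alpha>) * rd n m Q q A x l s i"
proof -
  have h: "rd n m Q q A (\<lambda>i. x i + \<alpha> * dx i) (\<lambda>k. l k + \<alpha> * dl k) (\<lambda>i. s i + \<alpha> * ds i) i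
      = rd n m Q q A x l s i + \<alpha> * ((\<Sum>j\<le>n. Q i j * dx j) + (\<Sum>k<m. A k i * dl k) - ds i)"
    by (simp add: rd_def distrib_left sum.distrib sum_distrib_left algebra_simps)
  have e: "(\<Sum>j\<le>n. Q i j * dx j) + (\<Sum>k<m. A k i * dl k) - ds i = - rd n m Q q A x l s i"
    using assms unfolding newton_dir_def by blast
  show ?thesis unfolding h e by (simp add: algebra_simps)
qed

lemma rp_step:
  assumes "newton_dir n m Q q A \<sigma> x l s dx dl ds" "k < m"
  shows "rp n A (\<lambda>i. x i + \<alpha> * dx i) k = (1-\<alpha>) * rp n A x k"
proof -
  have h: "rp n A (\<lambda>i. x i + \<alpha> * dx i) k = rp n A x k + \<alpha> * Amul n A dx k"
    by (simp add: rp_def Amul_def distrib_left sum.distrib sum_distrib_left algebra_simps)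
  show ?thesis using assms unfolding h newton_dir_def by (simp add: algebra_simps)
qed

lemma res_step:
  assumes "newton_dir n m Q q A \<sigma> x l s dx dl ds" "\<alpha> \<le> 1"
  shows "res_norm n m Q q A (\<lambda>i. x i + \<alpha> * dx i) (\<lambda>k. l k + \<alpha> * dl k) (\<lambda>i. s i + \<alpha> * ds i)
       = (1-\<alpha>) * res_norm n m Q q A x l s"
proof -
  have "(\<Sum>i\<le>n. (rd n m Q q A (\<lambda>i. x i + \<alpha> * dx i) (\<lambda>k. l k + \<alpha> * dl k) (\<lambda>i. s i + \<alpha> * ds i) i)\<^sup>2)
      = (1-\<alpha>)^2 * (\<Sum>i\<le>n. (rd n m Q q A x l s i)\<^sup>2)"
    using rd_step[OF assms(1)] by (simp add: sum_distrib_left power_mult_distrib)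
  moreover have "(\<Sum>k<m. (rp n A (\<lambda>i. x i + \<alpha> * dx i) k)\<^sup>2) = (1-\<alpha>)^2 * (\<Sum>k<m. (rp n A x k)\<^sup>2)"
    using rp_step[OF assms(1)] by (simp add: sum_distrib_left power_mult_distrib)
  ultimately show ?thesis using assms(2)
    by (simp add: res_norm_def distrib_left[symmetric] real_sqrt_mult)
qed

lemma mu_step:
  assumes "newton_dir n m Q q A \<sigma> x l s dx dl ds"
  shows "mu n (\<lambda>i. x i + \<alpha> * dx i) (\<lambda>i. s i + \<alpha> * ds i)
     = (1 - \<alpha> + \<alpha> * \<sigma>) * mu n x s + \<alpha>^2 * (\<Sum>i\<le>n. dx i * ds i) / real (n+1)"
proof -
  have c: "\<forall>i\<le>n. s i * dx i + x i * ds i = - (x i * s i) + \<sigma> * mu n x s"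
    using assms unfolding newton_dir_def by blast
  have "(\<Sum>i\<le>n. (x i + \<alpha> * dx i) * (s i + \<alpha> * ds i))
     = (\<Sum>i\<le>n. x i * s i + \<alpha> * (s i * dx i + x i * ds i) + \<alpha>^2 * (dx i * ds i))"
    by (rule sum.cong) (auto simp: algebra_simps power2_eq_square)
  also have "\<dots> = (\<Sum>i\<le>n. x i * s i + \<alpha> * (- (x i * s i) + \<sigma> * mu n x s) + \<alpha>^2 * (dx i * ds i))"
    using c by (intro sum.cong) auto
  also have "\<dots> = (\<Sum>i\<le>n. (1 - \<alpha>) * (x i * s i)) + (\<Sum>i\<le>n. \<alpha> * \<sigma> * mu n x s) + (\<Sum>i\<le>n. \<alpha>^2 * (dx i * ds i))"
    by (simp only: sum.distrib[symmetric]) (rule sum.cong, simp_all add: algebra_simps)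
  also have "\<dots> = (1 - \<alpha>) * (\<Sum>i\<le>n. x i * s i) + \<alpha> * \<sigma> * mu n x s * real (n+1) + \<alpha>^2 * (\<Sum>i\<le>n. dx i * ds i)"
    by (simp add: sum_distrib_left[symmetric])
  finally have e: "(\<Sum>i\<le>n. (x i + \<alpha> * dx i) * (s i + \<alpha> * ds i)) = \<dots>" .
  have s: "(\<Sum>i\<le>n. x i * s i) = mu n x s * real (n+1)" unfolding mu_def by simp
  show ?thesis unfolding mu_def[of n "\<lambda>i. x i + \<alpha> * dx i"] e s
    by (simp add: field_simps)
qed

lemma step1:
  assumes sa: "standing_assms n m Q A" and opt: "optimal_pd n m Q q A xs ls ss"
  and zx: "\<forall>i\<le>n. xs i \<le> \<zeta>" and zs: "\<forall>i\<le>n. ss i \<le> \<zeta>"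
  and pos: "\<forall>i\<le>n. x i > 0 \<and> s i > 0"
  and nu0: "0 \<le> \<nu>" and nu1: "\<nu> \<le> 1"
  and rdk: "\<forall>i\<le>n. rd n m Q q A x l s i = \<nu> * rd n m Q q A (\<lambda>i. \<zeta>) (\<lambda>j. 0) (\<lambda>i. \<zeta>) i"
  and rpk: "\<forall>k<m. rp n A x k = \<nu> * rp n A (\<lambda>i. \<zeta>) k"
  and nub: "\<nu> * \<zeta>^2 \<le> \<beta> * mu n x s" and b1: "\<beta> \<ge> 1"
  shows "\<nu> * \<zeta> * (\<Sum>i\<le>n. x i + s i) \<le> 4 * \<beta> * real (n+1) * mu n x s"
proof -
  define u where "u = (\<lambda>i. x i - \<nu>*\<zeta> - (1-\<nu>) * xs i)"
  define v where "v = (\<lambda>i. s i - \<nu>*\<zeta> - (1-\<nu>) * ss i)"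
  define w where "w = (\<lambda>k. l k - (1-\<nu>) * ls k)"
  have rdo: "\<forall>i\<le>n. rd n m Q q A xs ls ss i = 0" and rpo: "\<forall>k<m. rp n A xs k = 0"
    and nn: "\<forall>i\<le>n. xs i \<ge> 0 \<and> ss i \<ge> 0" and cs: "(\<Sum>i\<le>n. xs i * ss i) = 0"
    using opt unfolding optimal_pd_def by auto
  have Au: "\<forall>k<m. Amul n A u k = 0"
  proof (intro allI impI)
    fix k assume k: "k < m"
    have "Amul n A u k = rp n A x k - \<nu> * rp n A (\<lambda>i. \<zeta>) k - (1-\<nu>) * rp n A xs k"
      unfolding u_def rp_def Amul_def
      by (simp add: sum_subtractf sum_distrib_left sum.distrib algebra_simps)
    then show "Amul n A u k = 0" using k rpk rpo by simp
  qed
  have eq: "\<forall>i\<le>n. (\<Sum>j\<le>n. Q i j * u j) + (\<Sum>k<m. A k i * w k) - v i = 0"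
  proof (intro allI impI)
    fix i assume i: "i \<le> n"
    have "(\<Sum>j\<le>n. Q i j * u j) + (\<Sum>k<m. A k i * w k) - v i
      = rd n m Q q A x l s i - \<nu> * rd n m Q q A (\<lambda>i. \<zeta>) (\<lambda>j. 0) (\<lambda>i. \<zeta>) i - (1-\<nu>) * rd n m Q q A xs ls ss i"
      unfolding u_def v_def w_def rd_def
      by (simp add: sum_subtractf sum_distrib_left sum.distrib algebra_simps)
    then show "(\<Sum>j\<le>n. Q i j * u j) + (\<Sum>k<m. A k i * w k) - v i = 0" using i rdk rdo by simp
  qed
  have uv: "0 \<le> (\<Sum>i\<le>n. u i * v i)" by (rule inner_nonneg[OF sa Au eq])
  have pw: "u i * v i \<le> x i * s i - \<nu>*\<zeta>*(x i + s i) + \<nu>^2*\<zeta>^2 + \<nu>*\<zeta>*(xs i + ss i) + (1-\<nu>)^2 * (xs i * ss i)"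
    if i: "i \<le> n" for i
  proof -
    have e: "u i * v i = x i * s i - \<nu>*\<zeta>*(x i + s i) + \<nu>^2*\<zeta>^2 + \<nu>*(1-\<nu>)*\<zeta>*(xs i + ss i)
       + (1-\<nu>)^2 * (xs i * ss i) - (1-\<nu>)*(x i * ss i + s i * xs i)"
      unfolding u_def v_def by (simp add: algebra_simps power2_eq_square)
    have z: "\<zeta> \<ge> 0" using zx nn i by (meson order_trans)
    have "0 \<le> (1-\<nu>)*(x i * ss i + s i * xs i)" using nu1 pos nn i by (simp add: less_imp_le)
    moreover have "\<nu>*(1-\<nu>)*\<zeta>*(xs i + ss i) \<le> \<nu>*\<zeta>*(xs i + ss i)"
    proof -
      have "0 \<le> \<nu>*\<zeta>*(xs i + ss i)" using nu0 z nn i by simp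
      then have "(1-\<nu>) * (\<nu>*\<zeta>*(xs i + ss i)) \<le> 1 * (\<nu>*\<zeta>*(xs i + ss i))"
        using nu0 by (intro mult_right_mono) auto
      then show ?thesis by (simp add: mult_ac)
    qed
    ultimately show ?thesis unfolding e by linarith
  qed
  define N where "N = real (n+1)"
  define S where "S = (\<Sum>i\<le>n. x i + s i)"
  have sxs: "(\<Sum>i\<le>n. x i * s i) = N * mu n x s" unfolding mu_def N_def by simp
  have "(\<Sum>i\<le>n. u i * v i) \<le> (\<Sum>i\<le>n. x i * s i - \<nu>*\<zeta>*(x i + s i) + \<nu>^2*\<zeta>^2 + \<nu>*\<zeta>*(xs i + ss i) + (1-\<nu>)^2 * (xs i * ss i))"
    by (rule sum_mono) (use pw in auto)
  also have "\<dots> = (\<Sum>i\<le>n. x i * s i) - \<nu>*\<zeta>*S + N*(\<nu>^2*\<zeta>^2) + \<nu>*\<zeta>*(\<Sum>i\<le>n. xs i + ss i) + (1-\<nu>)^2 * (\<Sum>i\<le>n. xs i * ss i)"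
    unfolding S_def N_def by (simp add: sum.distrib sum_subtractf sum_distrib_left[symmetric])
  finally have A1: "0 \<le> N * mu n x s - \<nu>*\<zeta>*S + N*(\<nu>^2*\<zeta>^2) + \<nu>*\<zeta>*(\<Sum>i\<le>n. xs i + ss i)"
    using uv cs sxs by simp
  have "(\<Sum>i\<le>n. xs i + ss i) \<le> (\<Sum>i\<le>n. 2*\<zeta>)" proof (rule sum_mono)
    fix i assume "i \<in> {..n}"
    then have "xs i \<le> \<zeta>" "ss i \<le> \<zeta>" using zx zs by auto
    then show "xs i + ss i \<le> 2*\<zeta>" by simp
  qed
  then have A2: "(\<Sum>i\<le>n. xs i + ss i) \<le> 2*N*\<zeta>" unfolding N_def by (simp add: algebra_simps)
  have z: "\<zeta> \<ge> 0" using zx nn by (meson order_trans order_refl)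
  have A3: "\<nu>*\<zeta>*(\<Sum>i\<le>n. xs i + ss i) \<le> 2*N*(\<nu>*\<zeta>^2)"
    using mult_left_mono[OF A2, of "\<nu>*\<zeta>"] nu0 z by (simp add: power2_eq_square mult_ac)
  have A4: "\<nu>^2*\<zeta>^2 \<le> \<nu>*\<zeta>^2"
    using mult_right_mono[OF nu1, of "\<nu>*\<zeta>^2"] nu0 by (simp add: power2_eq_square mult_ac)
  have Np: "N \<ge> 1" unfolding N_def by simp
  have mu0: "mu n x s \<ge> 0" unfolding mu_def using pos by (intro divide_nonneg_pos sum_nonneg) (auto intro: less_imp_le)
  have "\<nu>*\<zeta>*S \<le> N * mu n x s + N*(\<nu>*\<zeta>^2) + 2*N*(\<nu>*\<zeta>^2)"
    using A1 A3 mult_left_mono[OF A4, of N] Np by linarith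
  also have "\<dots> = N * mu n x s + 3*N*(\<nu>*\<zeta>^2)" by simp
  also have "\<dots> \<le> N * mu n x s + 3*N*(\<beta> * mu n x s)"
    using mult_left_mono[OF nub, of "3*N"] Np by simp
  also have "\<dots> \<le> 4 * \<beta> * N * mu n x s"
    using mult_right_mono[OF b1, of "N * mu n x s"] Np mu0 by (simp add: algebra_simps)
  finally show ?thesis unfolding S_def N_def .
qed

lemma div_le_gm: fixes X p g :: real
  assumes "X \<ge> 0" "p \<ge> g" "g > 0" shows "X / p \<le> X / g"
  using assms by (simp add: divide_left_mono)

lemma pw2:
  fixes x s dx ds e f \<sigma> \<mu> \<gamma> K :: real
  assumes x: "x > 0" and s: "s > 0" and nb: "x*s \<ge> \<gamma>*\<mu>" and g: "\<gamma> > 0" and mu: "\<mu> > 0"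
    and sg: "0 < \<sigma>" "\<sigma> \<le> 1" and nt: "s*dx + x*ds = -(x*s) + \<sigma>*\<mu>"
    and e: "0 \<le> e" "e \<le> K" and f: "0 \<le> f" "f \<le> K"
  shows "s/x*dx^2 + x/s*ds^2 \<le> 4*(x*s + \<mu>/\<gamma>) + 6*(K^2*(x+s)^2/(\<gamma>*\<mu>)) - 4*((dx+e)*(ds+f))"
proof -
  define a where "a = dx + e"
  define b where "b = ds + f"
  define p where "p = x*s"
  have p: "p > 0" "p \<ge> \<gamma>*\<mu>" using x s nb by (auto simp: p_def)
  have gm: "\<gamma>*\<mu> > 0" using g mu by simp
  have K: "K \<ge> 0" using e by simp
  have id: "s/x*a^2 + x/s*b^2 = (s*a+x*b)^2/p - 2*(a*b)"
    using x s unfolding p_def by (simp add: field_simps power2_eq_square)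
  have t1: "s/x*dx^2 \<le> 2*(s/x*a^2) + 2*(s/x*e^2)"
  proof -
    have "0 \<le> (dx + 2*e)^2" by simp
    then have "dx^2 \<le> 2*a^2 + 2*e^2" unfolding a_def by (simp add: power2_eq_square algebra_simps)
    then have "s/x*dx^2 \<le> s/x*(2*a^2 + 2*e^2)" using x s by (intro mult_left_mono) auto
    then show ?thesis by (simp add: algebra_simps)
  qed
  have t2: "x/s*ds^2 \<le> 2*(x/s*b^2) + 2*(x/s*f^2)"
  proof -
    have "0 \<le> (ds + 2*f)^2" by simp
    then have "ds^2 \<le> 2*b^2 + 2*f^2" unfolding b_def by (simp add: power2_eq_square algebra_simps)
    then have "x/s*ds^2 \<le> x/s*(2*b^2 + 2*f^2)" using x s by (intro mult_left_mono) auto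
    then show ?thesis by (simp add: algebra_simps)
  qed
  define c where "c = -(x*s) + \<sigma>*\<mu>"
  define gg where "gg = s*e + x*f"
  have sab: "s*a + x*b = c + gg" unfolding a_def b_def c_def gg_def using nt by (simp add: algebra_simps)
  have cg: "(c+gg)^2 \<le> 2*c^2 + 2*gg^2"
  proof -
    have "0 \<le> (c - gg)^2" by simp
    then show ?thesis by (simp add: power2_eq_square algebra_simps)
  qed
  have c2: "c^2/p \<le> p + \<mu>/\<gamma>"
  proof -
    have "c^2 = p^2 - 2*\<sigma>*\<mu>*p + (\<sigma>*\<mu>)^2" unfolding c_def p_def by (simp add: power2_eq_square algebra_simps)
    also have "\<dots> \<le> p^2 + \<mu>^2"
    proof -
      have "0 \<le> 2*\<sigma>*\<mu>*p" using sg mu p by simp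
      moreover have "(\<sigma>*\<mu>)^2 \<le> \<mu>^2" using sg mu by (simp add: power_mult_distrib power_le_one mult_le_cancel_right1)
      ultimately show ?thesis by linarith
    qed
    finally have "c^2/p \<le> (p^2 + \<mu>^2)/p" using p by (simp add: divide_right_mono)
    also have "\<dots> = p + \<mu>^2/p" using p by (simp add: field_simps power2_eq_square)
    also have "\<mu>^2/p \<le> \<mu>^2/(\<gamma>*\<mu>)" by (rule div_le_gm) (use p gm in auto)
    also have "\<mu>^2/(\<gamma>*\<mu>) = \<mu>/\<gamma>" using mu g by (simp add: power2_eq_square)
    finally show ?thesis by simp
  qed
  have g2: "gg^2/p \<le> K^2*(x+s)^2/(\<gamma>*\<mu>)"
  proof -
    have "0 \<le> gg" unfolding gg_def using x s e f by simp
    moreover have "gg \<le> K*(x+s)" unfolding gg_def using x s e f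
      by (smt (verit) distrib_left mult.commute mult_right_mono)
    ultimately have "gg^2 \<le> (K*(x+s))^2" by (simp add: power_mono)
    then have "gg^2/p \<le> (K*(x+s))^2/p" using p by (simp add: divide_right_mono)
    also have "\<dots> \<le> (K*(x+s))^2/(\<gamma>*\<mu>)" by (rule div_le_gm) (use p gm in auto)
    finally show ?thesis by (simp add: power_mult_distrib)
  qed
  have e2: "s/x*e^2 \<le> K^2*s^2/(\<gamma>*\<mu>)"
  proof -
    have "e^2 \<le> K^2" using e by (simp add: power_mono)
    then have "s/x*e^2 \<le> s/x*K^2" using x s by (intro mult_left_mono) auto
    also have "s/x*K^2 = K^2*s^2/p" unfolding p_def using x s by (simp add: field_simps power2_eq_square)
    also have "\<dots> \<le> K^2*s^2/(\<gamma>*\<mu>)" by (rule div_le_gm) (use p gm in auto)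
    finally show ?thesis .
  qed
  have f2: "x/s*f^2 \<le> K^2*x^2/(\<gamma>*\<mu>)"
  proof -
    have "f^2 \<le> K^2" using f by (simp add: power_mono)
    then have "x/s*f^2 \<le> x/s*K^2" using x s by (intro mult_left_mono) auto
    also have "x/s*K^2 = K^2*x^2/p" unfolding p_def using x s by (simp add: field_simps power2_eq_square)
    also have "\<dots> \<le> K^2*x^2/(\<gamma>*\<mu>)" by (rule div_le_gm) (use p gm in auto)
    finally show ?thesis .
  qed
  have xs2: "K^2*s^2/(\<gamma>*\<mu>) + K^2*x^2/(\<gamma>*\<mu>) \<le> K^2*(x+s)^2/(\<gamma>*\<mu>)"
  proof -
    have "0 \<le> K*(K*(s*x))" using x s K by simp
    then have "K^2*s^2 + K^2*x^2 \<le> K^2*(x+s)^2"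
      by (simp add: power2_eq_square algebra_simps)
    then show ?thesis using gm by (simp add: add_divide_distrib[symmetric] divide_right_mono)
  qed
  have cgp: "(s*a+x*b)^2/p \<le> 2*(c^2/p) + 2*(gg^2/p)"
  proof -
    have "(s*a+x*b)^2/p \<le> (2*c^2 + 2*gg^2)/p" unfolding sab using cg p by (intro divide_right_mono) auto
    also have "\<dots> = 2*(c^2/p) + 2*(gg^2/p)" by (simp add: add_divide_distrib)
    finally show ?thesis .
  qed
  have "s/x*dx^2 + x/s*ds^2 \<le> 2*(s/x*a^2 + x/s*b^2) + 2*(s/x*e^2) + 2*(x/s*f^2)"
    using t1 t2 by simp
  also have "\<dots> = 2*((s*a+x*b)^2/p) - 4*(a*b) + 2*(s/x*e^2) + 2*(x/s*f^2)" unfolding id by simp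
  also have "\<dots> \<le> 4*(x*s + \<mu>/\<gamma>) + 6*(K^2*(x+s)^2/(\<gamma>*\<mu>)) - 4*(a*b)"
    using cgp c2 g2 e2 f2 xs2 unfolding p_def by argo
  finally show ?thesis unfolding a_def b_def .
qed

lemma sumsq_le_sqsum:
  fixes y :: "nat \<Rightarrow> real"
  assumes "\<forall>i\<le>n. y i \<ge> 0"
  shows "(\<Sum>i\<le>n. (y i)^2) \<le> (\<Sum>i\<le>n. y i)^2"
proof -
  have "(\<Sum>i\<le>n. (y i)^2) \<le> (\<Sum>i\<le>n. y i * (\<Sum>j\<le>n. y j))"
  proof (rule sum_mono)
    fix i assume i: "i \<in> {..n}"
    have "y i \<le> (\<Sum>j\<le>n. y j)" using i assms by (intro member_le_sum) auto
    then show "(y i)^2 \<le> y i * (\<Sum>j\<le>n. y j)" using i assms by (simp add: power2_eq_square mult_left_mono)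
  qed
  also have "\<dots> = (\<Sum>i\<le>n. y i)^2" by (simp add: power2_eq_square sum_distrib_right)
  finally show ?thesis .
qed

lemma step2:
  assumes sa: "standing_assms n m Q A" and opt: "optimal_pd n m Q q A xs ls ss"
  and zx: "\<forall>i\<le>n. xs i \<le> \<zeta>" and zs: "\<forall>i\<le>n. ss i \<le> \<zeta>"
  and pos: "\<forall>i\<le>n. x i > 0 \<and> s i > 0"
  and nbc: "\<forall>i\<le>n. x i * s i \<ge> \<gamma> * mu n x s" and g0: "0 < \<gamma>" and g1: "\<gamma> \<le> 1"
  and nu0: "0 \<le> \<nu>" and nu1: "\<nu> \<le> 1"
  and rdk: "\<forall>i\<le>n. rd n m Q q A x l s i = \<nu> * rd n m Q q A (\<lambda>i. \<zeta>) (\<lambda>j. 0) (\<lambda>i. \<zeta>) i"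
  and rpk: "\<forall>k<m. rp n A x k = \<nu> * rp n A (\<lambda>i. \<zeta>) k"
  and nd: "newton_dir n m Q q A \<sigma> x l s dx dl ds" and sg: "0 < \<sigma>" "\<sigma> \<le> 1"
  and S1: "\<nu> * \<zeta> * (\<Sum>i\<le>n. x i + s i) \<le> 4 * \<beta> * real (n+1) * mu n x s" and b1: "\<beta> \<ge> 1"
  shows "(\<Sum>i\<le>n. s i / x i * (dx i)^2 + x i / s i * (ds i)^2) \<le> 104*\<beta>^2*(real(n+1))^2*mu n x s/\<gamma>"
proof -
  define a where "a = (\<lambda>i. dx i + \<nu>*(\<zeta> - xs i))"
  define b where "b = (\<lambda>i. ds i + \<nu>*(\<zeta> - ss i))"
  define w where "w = (\<lambda>k. dl k - \<nu> * ls k)"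
  have rdo: "\<forall>i\<le>n. rd n m Q q A xs ls ss i = 0" and rpo: "\<forall>k<m. rp n A xs k = 0"
    and nn: "\<forall>i\<le>n. xs i \<ge> 0 \<and> ss i \<ge> 0"
    using opt unfolding optimal_pd_def by auto
  have nd1: "\<forall>i\<le>n. (\<Sum>j\<le>n. Q i j * dx j) + (\<Sum>k<m. A k i * dl k) - ds i = - rd n m Q q A x l s i"
    and nd2: "\<forall>k<m. Amul n A dx k = - rp n A x k"
    and nd3: "\<forall>i\<le>n. s i * dx i + x i * ds i = - (x i * s i) + \<sigma> * mu n x s"
    using nd unfolding newton_dir_def by auto
  have Au: "\<forall>k<m. Amul n A a k = 0"
  proof (intro allI impI)
    fix k assume k: "k < m"
    have "Amul n A a k = Amul n A dx k + \<nu> * rp n A (\<lambda>i. \<zeta>) k - \<nu> * rp n A xs k"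
      unfolding a_def rp_def Amul_def
      by (simp add: sum_subtractf sum_distrib_left sum.distrib algebra_simps)
    then show "Amul n A a k = 0" using k rpk rpo nd2 by simp
  qed
  have eq: "\<forall>i\<le>n. (\<Sum>j\<le>n. Q i j * a j) + (\<Sum>k<m. A k i * w k) - b i = 0"
  proof (intro allI impI)
    fix i assume i: "i \<le> n"
    have "(\<Sum>j\<le>n. Q i j * a j) + (\<Sum>k<m. A k i * w k) - b i
      = ((\<Sum>j\<le>n. Q i j * dx j) + (\<Sum>k<m. A k i * dl k) - ds i)
        + \<nu> * rd n m Q q A (\<lambda>i. \<zeta>) (\<lambda>j. 0) (\<lambda>i. \<zeta>) i - \<nu> * rd n m Q q A xs ls ss i"
      unfolding a_def b_def w_def rd_def
      by (simp add: sum_subtractf sum_distrib_left sum.distrib algebra_simps)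
    then show "(\<Sum>j\<le>n. Q i j * a j) + (\<Sum>k<m. A k i * w k) - b i = 0" using i rdk rdo nd1 by simp
  qed
  have ab: "0 \<le> (\<Sum>i\<le>n. a i * b i)" by (rule inner_nonneg[OF sa Au eq])
  define N where "N = real (n+1)"
  define \<mu> where "\<mu> = mu n x s"
  define K where "K = \<nu> * \<zeta>"
  define S where "S = (\<Sum>i\<le>n. x i + s i)"
  have Np: "N \<ge> 1" unfolding N_def by simp
  have mup: "\<mu> > 0" unfolding \<mu>_def mu_def using pos
    by (intro divide_pos_pos sum_pos) (auto intro: mult_pos_pos)
  have z: "\<zeta> \<ge> 0" using zx nn by (meson order_trans order_refl)
  have S0: "S \<ge> 0" unfolding S_def using pos by (intro sum_nonneg) (auto intro: add_nonneg_nonneg less_imp_le)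
  have pw: "s i / x i * (dx i)^2 + x i / s i * (ds i)^2
      \<le> 4*(x i * s i + \<mu>/\<gamma>) + 6*(K^2*(x i + s i)^2/(\<gamma>*\<mu>)) - 4*(a i * b i)" if i: "i \<le> n" for i
    unfolding a_def b_def
  proof (rule pw2)
    show "0 < x i" "0 < s i" using pos i by auto
    show "\<gamma> * \<mu> \<le> x i * s i" using nbc i unfolding \<mu>_def by auto
    show "0 < \<gamma>" "0 < \<mu>" "0 < \<sigma>" "\<sigma> \<le> 1" using g0 mup sg by auto
    show "s i * dx i + x i * ds i = - (x i * s i) + \<sigma> * \<mu>" using nd3 i unfolding \<mu>_def by auto
    have "xs i \<ge> 0" "xs i \<le> \<zeta>" "ss i \<ge> 0" "ss i \<le> \<zeta>" using nn zx zs i by auto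
    then show "0 \<le> \<nu> * (\<zeta> - xs i)" "\<nu> * (\<zeta> - xs i) \<le> K" "0 \<le> \<nu> * (\<zeta> - ss i)" "\<nu> * (\<zeta> - ss i) \<le> K"
      unfolding K_def using nu0 by (auto intro: mult_left_mono)
  qed
  have "(\<Sum>i\<le>n. s i / x i * (dx i)^2 + x i / s i * (ds i)^2)
     \<le> (\<Sum>i\<le>n. 4*(x i * s i + \<mu>/\<gamma>) + 6*(K^2*(x i + s i)^2/(\<gamma>*\<mu>)) - 4*(a i * b i))"
    by (rule sum_mono) (use pw in auto)
  also have "\<dots> = 4*(\<Sum>i\<le>n. x i * s i) + 4*N*(\<mu>/\<gamma>) + 6*(K^2*(\<Sum>i\<le>n. (x i + s i)^2)/(\<gamma>*\<mu>)) - 4*(\<Sum>i\<le>n. a i * b i)"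
  proof -
    have e1: "(\<Sum>i\<le>n. 4*(x i * s i + \<mu>/\<gamma>)) = 4*(\<Sum>i\<le>n. x i * s i) + 4*N*(\<mu>/\<gamma>)"
      unfolding N_def by (simp add: sum.distrib sum_distrib_left[symmetric] distrib_left)
    have e2: "(\<Sum>i\<le>n. 6*(K^2*(x i + s i)^2/(\<gamma>*\<mu>))) = 6*(K^2*(\<Sum>i\<le>n. (x i + s i)^2)/(\<gamma>*\<mu>))"
      by (simp add: sum_distrib_left[symmetric] sum_divide_distrib[symmetric])
    have e3: "(\<Sum>i\<le>n. 4*(a i * b i)) = 4*(\<Sum>i\<le>n. a i * b i)"
      by (simp add: sum_distrib_left[symmetric])
    show ?thesis by (simp only: sum.distrib sum_subtractf e1 e2 e3)
  qed
  finally have T1: "(\<Sum>i\<le>n. s i / x i * (dx i)^2 + x i / s i * (ds i)^2)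
     \<le> 4*(N*\<mu>) + 4*N*(\<mu>/\<gamma>) + 6*(K^2*(\<Sum>i\<le>n. (x i + s i)^2)/(\<gamma>*\<mu>))"
    using ab unfolding \<mu>_def N_def mu_def by simp
  have sq: "(\<Sum>i\<le>n. (x i + s i)^2) \<le> S^2" unfolding S_def
    by (rule sumsq_le_sqsum) (use pos in \<open>auto intro: add_nonneg_nonneg less_imp_le\<close>)
  have KS: "K*S \<le> 4*\<beta>*N*\<mu>" using S1 unfolding K_def S_def N_def \<mu>_def by simp
  have KS0: "K*S \<ge> 0" unfolding K_def using nu0 z S0 by simp
  have "K^2*(\<Sum>i\<le>n. (x i + s i)^2) \<le> K^2*S^2" using sq by (simp add: mult_left_mono)
  also have "\<dots> = (K*S)^2" by (simp add: power_mult_distrib)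
  also have "\<dots> \<le> (4*\<beta>*N*\<mu>)^2" using KS KS0 by (simp add: power_mono)
  finally have T2: "K^2*(\<Sum>i\<le>n. (x i + s i)^2)/(\<gamma>*\<mu>) \<le> (4*\<beta>*N*\<mu>)^2/(\<gamma>*\<mu>)"
    using g0 mup by (simp add: divide_right_mono)
  have T3: "(4*\<beta>*N*\<mu>)^2/(\<gamma>*\<mu>) = 16*(\<beta>^2*N^2*\<mu>/\<gamma>)" using mup g0 by (simp add: field_simps power2_eq_square)
  have bN: "N*\<mu> \<le> \<beta>^2*N^2*\<mu>/\<gamma>"
  proof -
    have "1 \<le> \<beta>^2" using b1 by (simp add: one_le_power)
    moreover have "1 \<le> N" by (rule Np)
    ultimately have "1 \<le> \<beta>^2 * N" using mult_mono[of 1 "\<beta>^2" 1 N] by simp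
    have "N*\<mu> \<le> N*\<mu>/\<gamma>" using g0 g1 mup Np by (simp add: le_divide_eq)
    also have "\<dots> \<le> (\<beta>^2*N)*(N*\<mu>)/\<gamma>" using \<open>1 \<le> \<beta>^2 * N\<close> mup Np g0
      by (intro divide_right_mono) (auto intro: mult_le_cancel_right1[THEN iffD2])
    also have "\<dots> = \<beta>^2*N^2*\<mu>/\<gamma>" by (simp add: power2_eq_square)
    finally show ?thesis .
  qed
  have bN2: "N*(\<mu>/\<gamma>) \<le> \<beta>^2*N^2*\<mu>/\<gamma>"
  proof -
    have "N*\<mu> \<le> \<beta>^2*N^2*\<mu>" 
    proof -
      have "1 \<le> \<beta>^2" using b1 by (simp add: one_le_power)
      then have "1 \<le> \<beta>^2 * N" using Np mult_mono[of 1 "\<beta>^2" 1 N] by simp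
      then have "1*(N*\<mu>) \<le> (\<beta>^2*N)*(N*\<mu>)" using mup Np by (intro mult_right_mono) auto
      then show ?thesis by (simp add: power2_eq_square mult_ac)
    qed
    then show ?thesis using g0 by (simp add: divide_right_mono)
  qed
  show ?thesis using T1 T2 T3 bN bN2 unfolding N_def \<mu>_def by argo
qed

lemma arith3:
  fixes \<mu> p d t \<gamma> \<sigma> \<sigma>min L \<alpha> :: real
  assumes mu: "\<mu> > 0" and p: "p \<ge> \<gamma>*\<mu>" and g: "0 < \<gamma>" "\<gamma> < 1"
    and sg: "0 < \<sigma>min" "\<sigma>min \<le> \<sigma>" "\<sigma> \<le> 1/2" and L: "L \<ge> 1"
    and a: "0 \<le> \<alpha>" "\<alpha> \<le> \<sigma>min*(1-\<gamma>)/(2*L)"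
    and d: "\<bar>d\<bar> \<le> L*\<mu>" and t: "\<bar>t\<bar> \<le> L*\<mu>"
  shows "(1-\<alpha>)*p + \<alpha>*\<sigma>*\<mu> + \<alpha>^2*d \<ge> \<gamma>*((1-\<alpha>+\<alpha>*\<sigma>)*\<mu> + \<alpha>^2*t)"
    and "(1-\<alpha>+\<alpha>*\<sigma>)*\<mu> + \<alpha>^2*t \<ge> (1-\<alpha>)*\<mu>"
    and "(1-\<alpha>+\<alpha>*\<sigma>)*\<mu> + \<alpha>^2*t \<le> (1-0.01*\<alpha>)*\<mu>"
    and "\<alpha> \<le> 1/4"
proof -
  define h where "h = \<alpha>*L"
  have h0: "h \<ge> 0" unfolding h_def using a L by simp
  have hb: "h \<le> \<sigma>min*(1-\<gamma>)/2" unfolding h_def using a L by (simp add: field_simps)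
  have hb2: "2*h \<le> \<sigma>*(1-\<gamma>)"
  proof -
    have "\<sigma>min*(1-\<gamma>) \<le> \<sigma>*(1-\<gamma>)" using sg g by (intro mult_right_mono) auto
    then show ?thesis using hb by simp
  qed
  have hq: "h \<le> 1/4"
  proof -
    have "\<sigma>min*(1-\<gamma>) \<le> (1/2)*1" using sg g by (intro mult_mono) auto
    then show ?thesis using hb by simp
  qed
  show a4: "\<alpha> \<le> 1/4"
  proof -
    have "\<alpha> \<le> \<alpha>*L" using a L by (simp add: mult_le_cancel_left1)
    then show ?thesis using hq h_def by simp
  qed
  have a2d: "\<alpha>^2*d \<ge> -(\<alpha>*h*\<mu>)"
  proof -
    have "\<alpha>^2*\<bar>d\<bar> \<le> \<alpha>^2*(L*\<mu>)" using d by (simp add: mult_left_mono)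
    moreover have "-(\<alpha>^2*\<bar>d\<bar>) \<le> \<alpha>^2*d"
    proof -
      have "\<alpha>^2*(-\<bar>d\<bar>) \<le> \<alpha>^2*d" by (intro mult_left_mono) auto
      then show ?thesis by simp
    qed
    ultimately show ?thesis unfolding h_def by (simp add: power2_eq_square mult_ac)
  qed
  have a2t: "\<bar>\<alpha>^2*t\<bar> \<le> \<alpha>*h*\<mu>"
  proof -
    have "\<bar>\<alpha>^2*t\<bar> = \<alpha>^2*\<bar>t\<bar>" by (simp add: abs_mult)
    also have "\<dots> \<le> \<alpha>^2*(L*\<mu>)" using t by (simp add: mult_left_mono)
    finally show ?thesis unfolding h_def by (simp add: power2_eq_square mult_ac)
  qed
  have ahm: "\<alpha>*h*\<mu> \<ge> 0" using a h0 mu by simp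
  show "(1-\<alpha>)*p + \<alpha>*\<sigma>*\<mu> + \<alpha>^2*d \<ge> \<gamma>*((1-\<alpha>+\<alpha>*\<sigma>)*\<mu> + \<alpha>^2*t)"
  proof -
    have "(1-\<alpha>)*p \<ge> (1-\<alpha>)*(\<gamma>*\<mu>)" using p a4 by (intro mult_left_mono) auto
    moreover have "\<gamma>*(\<alpha>^2*t) \<le> \<alpha>*h*\<mu>"
    proof -
      have "\<gamma>*(\<alpha>^2*t) \<le> \<gamma>*\<bar>\<alpha>^2*t\<bar>" using g by (intro mult_left_mono) auto
      also have "\<dots> \<le> 1*\<bar>\<alpha>^2*t\<bar>" using g by (intro mult_right_mono) auto
      finally show ?thesis using a2t by simp
    qed
    moreover have "2*(\<alpha>*h*\<mu>) \<le> \<alpha>*\<mu>*(\<sigma>*(1-\<gamma>))"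
    proof -
      have "\<alpha>*\<mu>*(2*h) \<le> \<alpha>*\<mu>*(\<sigma>*(1-\<gamma>))" using hb2 a mu by (intro mult_left_mono) auto
      then show ?thesis by (simp add: mult_ac)
    qed
    ultimately show ?thesis using a2d by (simp add: algebra_simps)
  qed
  show "(1-\<alpha>+\<alpha>*\<sigma>)*\<mu> + \<alpha>^2*t \<ge> (1-\<alpha>)*\<mu>"
  proof -
    have "\<alpha>*h*\<mu> \<le> \<alpha>*\<sigma>*\<mu>"
    proof -
      have "h \<le> \<sigma>" using hb2 g h0 sg by (smt (verit) mult_left_le)
      then show ?thesis using a mu by (intro mult_right_mono mult_left_mono) auto
    qed
    then show ?thesis using a2t by (simp add: algebra_simps abs_le_iff)
  qed
  show "(1-\<alpha>+\<alpha>*\<sigma>)*\<mu> + \<alpha>^2*t \<le> (1-0.01*\<alpha>)*\<mu>"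
  proof -
    have "\<alpha>*h*\<mu> \<le> \<alpha>*(0.99 - \<sigma>)*\<mu>"
    proof -
      have "h \<le> 0.99 - \<sigma>" using hq sg by simp
      then show ?thesis using a mu by (intro mult_right_mono mult_left_mono) auto
    qed
    then show ?thesis using a2t by (simp add: algebra_simps abs_le_iff)
  qed
qed

lemma prodbound:
  fixes x s dx ds :: real
  assumes x: "x > 0" and s: "s > 0"
  shows "\<bar>dx*ds\<bar> \<le> (s/x*dx^2 + x/s*ds^2)/2"
proof -
  have "0 \<le> (s*\<bar>dx\<bar> - x*\<bar>ds\<bar>)^2" by simp
  then have h: "2*(x*s)*\<bar>dx*ds\<bar> \<le> s^2*dx^2 + x^2*ds^2"
    by (simp add: power2_eq_square algebra_simps abs_mult)
  have eq: "(s^2*dx^2 + x^2*ds^2)/(2*(x*s)) = (s/x*dx^2 + x/s*ds^2)/2"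
    using x s by (simp add: field_simps power2_eq_square)
  have h2: "\<bar>dx*ds\<bar> \<le> (s^2*dx^2 + x^2*ds^2)/(2*(x*s))"
    using h x s by (simp add: le_divide_eq mult_ac)
  show ?thesis by (rule order_trans[OF h2 eq[THEN eq_refl]])
qed

lemma step3:
  assumes nb: "in_nbhd n m Q q A \<gamma> \<beta> x0 l0 s0 x l s"
    and nd: "newton_dir n m Q q A \<sigma> x l s dx dl ds"
    and g: "0 < \<gamma>" "\<gamma> < 1"
    and sg: "0 < \<sigma>min" "\<sigma>min \<le> \<sigma>" "\<sigma> \<le> 1/2" and L: "L \<ge> 1"
    and bd: "\<forall>i\<le>n. \<bar>dx i * ds i\<bar> \<le> L * mu n x s"
    and bdP: "\<bar>\<Sum>i\<le>n. dx i * ds i\<bar> \<le> L * mu n x s"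
  shows "step_ok n m Q q A \<gamma> \<beta> x0 l0 s0 x l s dx dl ds (\<sigma>min*(1-\<gamma>)/(2*L))"
proof -
  define ab where "ab = \<sigma>min*(1-\<gamma>)/(2*L)"
  define \<mu> where "\<mu> = mu n x s"
  define N where "N = real (n+1)"
  define P where "P = (\<Sum>i\<le>n. dx i * ds i)"
  define t where "t = P / N"
  have pos: "\<forall>i\<le>n. x i > 0 \<and> s i > 0" and cen: "\<forall>i\<le>n. x i * s i \<ge> \<gamma> * \<mu>"
    and resb: "res_norm n m Q q A x l s / \<mu> \<le> \<beta> * res_norm n m Q q A x0 l0 s0 / mu n x0 s0"
    using nb unfolding in_nbhd_def \<mu>_def by auto
  have mup: "\<mu> > 0" unfolding \<mu>_def mu_def using pos
    by (intro divide_pos_pos sum_pos) (auto intro: mult_pos_pos)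
  have Np: "N \<ge> 1" unfolding N_def by simp
  have tb: "\<bar>t\<bar> \<le> L*\<mu>"
  proof -
    have "\<bar>t\<bar> = \<bar>P\<bar>/N" unfolding t_def using Np by simp
    also have "\<dots> \<le> \<bar>P\<bar>" using Np by (simp add: divide_le_eq mult_le_cancel_left1)
    finally show ?thesis using bdP unfolding P_def \<mu>_def by simp
  qed
  have nd3: "\<forall>i\<le>n. s i * dx i + x i * ds i = - (x i * s i) + \<sigma> * \<mu>"
    using nd unfolding newton_dir_def \<mu>_def by auto
  have muA: "mu n (\<lambda>i. x i + \<alpha> * dx i) (\<lambda>i. s i + \<alpha> * ds i) = (1-\<alpha>+\<alpha>*\<sigma>)*\<mu> + \<alpha>^2*t" for \<alpha>
    using mu_step[OF nd, of \<alpha>] unfolding \<mu>_def t_def P_def N_def by simp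
  have prodA: "(x i + \<alpha> * dx i) * (s i + \<alpha> * ds i) = (1-\<alpha>)*(x i * s i) + \<alpha>*\<sigma>*\<mu> + \<alpha>^2*(dx i * ds i)"
    if i: "i \<le> n" for i \<alpha>
  proof -
    have "(x i + \<alpha> * dx i) * (s i + \<alpha> * ds i) = x i * s i + \<alpha>*(s i * dx i + x i * ds i) + \<alpha>^2*(dx i * ds i)"
      by (simp add: algebra_simps power2_eq_square)
    moreover have e: "s i * dx i + x i * ds i = - (x i * s i) + \<sigma> * \<mu>" using nd3 i by blast
    ultimately have "(x i + \<alpha> * dx i) * (s i + \<alpha> * ds i) = x i * s i + \<alpha>*(- (x i * s i) + \<sigma> * \<mu>) + \<alpha>^2*(dx i * ds i)"
      by simp
    then show ?thesis by (simp add: algebra_simps)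
  qed
  have key: "(\<forall>i\<le>n. (x i + \<alpha> * dx i) * (s i + \<alpha> * ds i) \<ge> \<gamma> * mu n (\<lambda>i. x i + \<alpha> * dx i) (\<lambda>i. s i + \<alpha> * ds i))
     \<and> mu n (\<lambda>i. x i + \<alpha> * dx i) (\<lambda>i. s i + \<alpha> * ds i) \<ge> (1-\<alpha>)*\<mu>
     \<and> mu n (\<lambda>i. x i + \<alpha> * dx i) (\<lambda>i. s i + \<alpha> * ds i) \<le> (1-0.01*\<alpha>)*\<mu>
     \<and> \<alpha> \<le> 1/4"
    if a: "0 \<le> \<alpha>" "\<alpha> \<le> ab" for \<alpha>
  proof (intro conjI allI impI)
    fix i assume i: "i \<le> n"
    have "(1-\<alpha>)*(x i * s i) + \<alpha>*\<sigma>*\<mu> + \<alpha>^2*(dx i * ds i) \<ge> \<gamma>*((1-\<alpha>+\<alpha>*\<sigma>)*\<mu> + \<alpha>^2*t)"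
      by (rule arith3(1)[OF mup _ g sg L a[unfolded ab_def] _ tb]) (use cen bd i \<mu>_def in auto)
    then show "(x i + \<alpha> * dx i) * (s i + \<alpha> * ds i) \<ge> \<gamma> * mu n (\<lambda>i. x i + \<alpha> * dx i) (\<lambda>i. s i + \<alpha> * ds i)"
      unfolding muA prodA[OF i] .
  next
    have cen0: "\<gamma>*\<mu> \<le> x 0 * s 0" using cen by auto
    have bd0: "\<bar>dx 0 * ds 0\<bar> \<le> L*\<mu>" using bd \<mu>_def by auto
    show "mu n (\<lambda>i. x i + \<alpha> * dx i) (\<lambda>i. s i + \<alpha> * ds i) \<ge> (1-\<alpha>)*\<mu>"
      unfolding muA by (rule arith3(2)[OF mup cen0 g sg L a[unfolded ab_def] bd0 tb])
    show "mu n (\<lambda>i. x i + \<alpha> * dx i) (\<lambda>i. s i + \<alpha> * ds i) \<le> (1-0.01*\<alpha>)*\<mu>"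
      unfolding muA by (rule arith3(3)[OF mup cen0 g sg L a[unfolded ab_def] bd0 tb])
    show "\<alpha> \<le> 1/4" by (rule arith3(4)[OF mup cen0 g sg L a[unfolded ab_def] bd0 tb])
  qed
  have ab0: "ab > 0" unfolding ab_def using sg g L by simp
  note kab = key[OF less_imp_le[OF ab0] order_refl]
  have ab1: "ab \<le> 1" using kab by simp
  have muab: "mu n (\<lambda>i. x i + ab * dx i) (\<lambda>i. s i + ab * ds i) > 0"
  proof -
    have "(1-ab)*\<mu> > 0" using kab mup by simp
    then show ?thesis using kab by linarith
  qed
  have posab: "\<forall>i\<le>n. x i + ab * dx i > 0 \<and> s i + ab * ds i > 0"
  proof (intro allI impI conjI)
    fix i assume i: "i \<le> n"
    have prodpos: "(x i + \<alpha> * dx i) * (s i + \<alpha> * ds i) > 0" if a: "0 \<le> \<alpha>" "\<alpha> \<le> ab" for \<alpha>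
    proof -
      have k: "(x i + \<alpha> * dx i) * (s i + \<alpha> * ds i) \<ge> \<gamma> * mu n (\<lambda>i. x i + \<alpha> * dx i) (\<lambda>i. s i + \<alpha> * ds i)"
        "mu n (\<lambda>i. x i + \<alpha> * dx i) (\<lambda>i. s i + \<alpha> * ds i) \<ge> (1-\<alpha>)*\<mu>" "\<alpha> \<le> 1/4"
        using key[OF a] i by auto
      have "(1-\<alpha>)*\<mu> > 0" using k(3) mup by simp
      then have "mu n (\<lambda>i. x i + \<alpha> * dx i) (\<lambda>i. s i + \<alpha> * ds i) > 0" using k(2) by linarith
      then have "\<gamma> * mu n (\<lambda>i. x i + \<alpha> * dx i) (\<lambda>i. s i + \<alpha> * ds i) > 0" using g by simp
      then show ?thesis using k(1) by linarith
    qed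
    show "x i + ab * dx i > 0"
    proof (rule ccontr)
      assume "\<not> x i + ab * dx i > 0"
      then have c: "x i + ab * dx i \<le> 0" by simp
      have xi: "x i > 0" using pos i by auto
      have dxn: "dx i < 0"
      proof (rule ccontr)
        assume "\<not> dx i < 0"
        then have "ab * dx i \<ge> 0" using ab0 by simp
        then show False using c xi by linarith
      qed
      define a' where "a' = x i / (- dx i)"
      have a'0: "0 \<le> a'" unfolding a'_def using xi dxn by (simp add: divide_pos_neg less_imp_le)
      have "x i \<le> ab * (- dx i)" using c by simp
      moreover have "- dx i > 0" using dxn by simp
      ultimately have a'1: "a' \<le> ab" unfolding a'_def using pos_divide_le_eq[of "- dx i" "x i" ab] by simp
      have "x i + a' * dx i = 0" unfolding a'_def using dxn by (simp add: field_simps)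
      then show False using prodpos[OF a'0 a'1] by simp
    qed
    show "s i + ab * ds i > 0"
    proof (rule ccontr)
      assume "\<not> s i + ab * ds i > 0"
      then have c: "s i + ab * ds i \<le> 0" by simp
      have si: "s i > 0" using pos i by auto
      have dsn: "ds i < 0"
      proof (rule ccontr)
        assume "\<not> ds i < 0"
        then have "ab * ds i \<ge> 0" using ab0 by simp
        then show False using c si by linarith
      qed
      define a' where "a' = s i / (- ds i)"
      have a'0: "0 \<le> a'" unfolding a'_def using si dsn by (simp add: divide_pos_neg less_imp_le)
      have "s i \<le> ab * (- ds i)" using c by simp
      moreover have "- ds i > 0" using dsn by simp
      ultimately have a'1: "a' \<le> ab" unfolding a'_def using pos_divide_le_eq[of "- ds i" "s i" ab] by simp
      have "s i + a' * ds i = 0" unfolding a'_def using dsn by (simp add: field_simps)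
      then show False using prodpos[OF a'0 a'1] by simp
    qed
  qed
  have resab: "res_norm n m Q q A (\<lambda>i. x i + ab * dx i) (\<lambda>k. l k + ab * dl k) (\<lambda>i. s i + ab * ds i)
      / mu n (\<lambda>i. x i + ab * dx i) (\<lambda>i. s i + ab * ds i)
      \<le> \<beta> * res_norm n m Q q A x0 l0 s0 / mu n x0 s0"
  proof -
    define R where "R = res_norm n m Q q A x l s"
    have R0: "R \<ge> 0" unfolding R_def res_norm_def by (simp add: add_nonneg_nonneg sum_nonneg)
    have "res_norm n m Q q A (\<lambda>i. x i + ab * dx i) (\<lambda>k. l k + ab * dl k) (\<lambda>i. s i + ab * ds i)
      / mu n (\<lambda>i. x i + ab * dx i) (\<lambda>i. s i + ab * ds i)
      = (1-ab)*R / mu n (\<lambda>i. x i + ab * dx i) (\<lambda>i. s i + ab * ds i)"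
      unfolding R_def using res_step[OF nd ab1] by simp
    also have "\<dots> \<le> (1-ab)*R / ((1-ab)*\<mu>)"
    proof (rule divide_left_mono)
      show "(1-ab)*\<mu> \<le> mu n (\<lambda>i. x i + ab * dx i) (\<lambda>i. s i + ab * ds i)" using kab by simp
      show "0 \<le> (1-ab)*R" using ab1 R0 by simp
      have "ab \<le> 1/4" using kab by simp
      then show "0 < mu n (\<lambda>i. x i + ab * dx i) (\<lambda>i. s i + ab * ds i) * ((1 - ab) * \<mu>)"
        using muab mup by simp
    qed
    also have "\<dots> = R / \<mu>" using kab by simp
    finally show ?thesis using resb unfolding R_def by simp
  qed
  show ?thesis unfolding step_ok_def in_nbhd_def ab_def[symmetric]
    using ab0 ab1 resab posab kab by (auto simp: \<mu>_def)
qed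

lemma one_step:
  assumes sa: "standing_assms n m Q A" and opt: "optimal_pd n m Q q A xs ls ss"
  and zx: "\<forall>i\<le>n. xs i \<le> \<zeta>" and zs: "\<forall>i\<le>n. ss i \<le> \<zeta>"
  and g0: "0 < \<gamma>" and g1: "\<gamma> < 1" and b1: "\<beta> \<ge> 1"
  and sg: "0 < \<sigma>min" "\<sigma>min \<le> \<sigma>" "\<sigma> \<le> 1/2"
  and nb: "in_nbhd n m Q q A \<gamma> \<beta> x0 l0 s0 x l s"
  and nu0: "0 \<le> \<nu>" and nu1: "\<nu> \<le> 1"
  and rdk: "\<forall>i\<le>n. rd n m Q q A x l s i = \<nu> * rd n m Q q A (\<lambda>i. \<zeta>) (\<lambda>j. 0) (\<lambda>i. \<zeta>) i"
  and rpk: "\<forall>k<m. rp n A x k = \<nu> * rp n A (\<lambda>i. \<zeta>) k"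
  and nub: "\<nu> * \<zeta>^2 \<le> \<beta> * mu n x s"
  and nd: "newton_dir n m Q q A \<sigma> x l s dx dl ds"
  shows "step_ok n m Q q A \<gamma> \<beta> x0 l0 s0 x l s dx dl ds (\<sigma>min*(1-\<gamma>)/(2*(52*\<beta>^2*(real(n+1))^2/\<gamma>)))"
proof -
  have pos: "\<forall>i\<le>n. x i > 0 \<and> s i > 0" and cen: "\<forall>i\<le>n. x i * s i \<ge> \<gamma> * mu n x s"
    using nb unfolding in_nbhd_def by auto
  have S1: "\<nu> * \<zeta> * (\<Sum>i\<le>n. x i + s i) \<le> 4 * \<beta> * real (n+1) * mu n x s"
    by (rule step1[OF sa opt zx zs pos nu0 nu1 rdk rpk nub b1])
  have T: "(\<Sum>i\<le>n. s i / x i * (dx i)^2 + x i / s i * (ds i)^2) \<le> 104*\<beta>^2*(real(n+1))^2*mu n x s/\<gamma>"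
    by (rule step2[OF sa opt zx zs pos cen g0 _ nu0 nu1 rdk rpk nd _ _ S1 b1]) (use g1 sg in auto)
  define L where "L = 52*\<beta>^2*(real(n+1))^2/\<gamma>"
  define tm where "tm = (\<lambda>i. s i / x i * (dx i)^2 + x i / s i * (ds i)^2)"
  have tm0: "\<forall>i\<le>n. tm i \<ge> 0" unfolding tm_def using pos by (auto intro!: add_nonneg_nonneg)
  have pb: "\<forall>i\<le>n. \<bar>dx i * ds i\<bar> \<le> tm i / 2" unfolding tm_def using pos prodbound by auto
  have TL: "(\<Sum>i\<le>n. tm i) / 2 \<le> L * mu n x s" using T unfolding tm_def L_def by simp
  have bd: "\<forall>i\<le>n. \<bar>dx i * ds i\<bar> \<le> L * mu n x s"
  proof (intro allI impI)
    fix i assume i: "i \<le> n"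
    have "tm i \<le> (\<Sum>i\<le>n. tm i)" using i tm0 by (intro member_le_sum) auto
    then show "\<bar>dx i * ds i\<bar> \<le> L * mu n x s" using pb i TL by fastforce
  qed
  have bdP: "\<bar>\<Sum>i\<le>n. dx i * ds i\<bar> \<le> L * mu n x s"
  proof -
    have "\<bar>\<Sum>i\<le>n. dx i * ds i\<bar> \<le> (\<Sum>i\<le>n. \<bar>dx i * ds i\<bar>)" by (rule sum_abs)
    also have "\<dots> \<le> (\<Sum>i\<le>n. tm i / 2)" by (rule sum_mono) (use pb in auto)
    also have "\<dots> = (\<Sum>i\<le>n. tm i) / 2" by (simp add: sum_divide_distrib)
    finally show ?thesis using TL by simp
  qed
  have L1: "L \<ge> 1"
  proof -
    have "1 \<le> \<beta>^2" using b1 by (simp add: one_le_power)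
    moreover have "1 \<le> (real(n+1))^2" by (simp add: one_le_power)
    ultimately have "1 \<le> \<beta>^2 * (real(n+1))^2" using mult_mono[of 1 "\<beta>^2" 1 "(real(n+1))^2"] by simp
    then have "1 \<le> 52*\<beta>^2*(real(n+1))^2" by simp
    also have "\<dots> \<le> 52*\<beta>^2*(real(n+1))^2/\<gamma>"
    proof -
      have "0 \<le> 52*\<beta>^2*(real(n+1))^2" by simp
      then have "(52*\<beta>^2*(real(n+1))^2) * \<gamma> \<le> (52*\<beta>^2*(real(n+1))^2) * 1" using g1 by (intro mult_left_mono) auto
      then show ?thesis using g0 by (simp add: le_divide_eq)
    qed
    finally show ?thesis unfolding L_def .
  qed
  show ?thesis using step3[OF nb nd g0 g1 sg L1 bd bdP] unfolding L_def .
qed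

lemma run_decay:
  assumes sa: "standing_assms n m Q A" and opt: "optimal_pd n m Q q A xs ls ss"
  and z0: "\<zeta> > 0" and zn: "sqrt ((\<Sum>i\<le>n. (xs i)\<^sup>2) + (\<Sum>i\<le>n. (ss i)\<^sup>2)) \<le> \<zeta>"
  and x0: "x 0 = (\<lambda>i. \<zeta>)" and l0: "l 0 = (\<lambda>j. 0)" and s0: "s 0 = (\<lambda>i. \<zeta>)"
  and run: "iipm_run n m Q q A \<beta> \<gamma> \<sigma>min \<sigma>max x l s"
  and g0: "0 < \<gamma>" and g1: "\<gamma> < 1" and b1: "\<beta> \<ge> 1"
  and sg: "0 < \<sigma>min" "\<sigma>min < \<sigma>max" "\<sigma>max \<le> 1/2"
  shows "mu n (x k) (s k) \<le> (1 - 0.01*(\<sigma>min*(1-\<gamma>)/(2*(52*\<beta>^2*(real(n+1))^2/\<gamma>))))^k * \<zeta>^2"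
proof -
  define ab where "ab = \<sigma>min*(1-\<gamma>)/(2*(52*\<beta>^2*(real(n+1))^2/\<gamma>))"
  obtain \<sigma> dx dl ds \<alpha> where H: "\<forall>k.
        \<sigma>min \<le> \<sigma> k \<and> \<sigma> k \<le> \<sigma>max \<and>
        newton_dir n m Q q A (\<sigma> k) (x k) (l k) (s k) (dx k) (dl k) (ds k) \<and>
        step_ok n m Q q A \<gamma> \<beta> (x 0) (l 0) (s 0) (x k) (l k) (s k) (dx k) (dl k) (ds k) (\<alpha> k) \<and>
        (\<forall>a. step_ok n m Q q A \<gamma> \<beta> (x 0) (l 0) (s 0) (x k) (l k) (s k) (dx k) (dl k) (ds k) a
               \<longrightarrow> a \<le> \<alpha> k) \<and>
        x (Suc k) = (\<lambda>i. x k i + \<alpha> k * dx k i) \<and>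
        l (Suc k) = (\<lambda>j. l k j + \<alpha> k * dl k j) \<and>
        s (Suc k) = (\<lambda>i. s k i + \<alpha> k * ds k i)"
    using run unfolding iipm_run_def by (elim exE) (erule that)
  note Hk = spec[OF H]
  have Hs1: "\<sigma>min \<le> \<sigma> k" for k using Hk[of k] by (rule conjunct1)
  have Hs2: "\<sigma> k \<le> \<sigma>max" for k using Hk[of k, THEN conjunct2] by (rule conjunct1)
  have Hnd: "newton_dir n m Q q A (\<sigma> k) (x k) (l k) (s k) (dx k) (dl k) (ds k)" for k
    using Hk[of k, THEN conjunct2, THEN conjunct2] by (rule conjunct1)
  have Hso: "step_ok n m Q q A \<gamma> \<beta> (x 0) (l 0) (s 0) (x k) (l k) (s k) (dx k) (dl k) (ds k) (\<alpha> k)" for k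
    using Hk[of k, THEN conjunct2, THEN conjunct2, THEN conjunct2] by (rule conjunct1)
  have Hmax: "\<forall>a. step_ok n m Q q A \<gamma> \<beta> (x 0) (l 0) (s 0) (x k) (l k) (s k) (dx k) (dl k) (ds k) a
               \<longrightarrow> a \<le> \<alpha> k" for k
    using Hk[of k, THEN conjunct2, THEN conjunct2, THEN conjunct2, THEN conjunct2] by (rule conjunct1)
  have Hx: "x (Suc k) = (\<lambda>i. x k i + \<alpha> k * dx k i)" for k
    using Hk[of k, THEN conjunct2, THEN conjunct2, THEN conjunct2, THEN conjunct2, THEN conjunct2] by (rule conjunct1)
  have Hl: "l (Suc k) = (\<lambda>j. l k j + \<alpha> k * dl k j)" for k
    using Hk[of k, THEN conjunct2, THEN conjunct2, THEN conjunct2, THEN conjunct2, THEN conjunct2, THEN conjunct2] by (rule conjunct1)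
  have Hs: "s (Suc k) = (\<lambda>i. s k i + \<alpha> k * ds k i)" for k
    using Hk[of k, THEN conjunct2, THEN conjunct2, THEN conjunct2, THEN conjunct2, THEN conjunct2, THEN conjunct2] by (rule conjunct2)
  have nn: "\<forall>i\<le>n. xs i \<ge> 0 \<and> ss i \<ge> 0" using opt unfolding optimal_pd_def by auto
  define sq where "sq = (\<Sum>i\<le>n. (xs i)\<^sup>2) + (\<Sum>i\<le>n. (ss i)\<^sup>2)"
  have sx0: "0 \<le> (\<Sum>i\<le>n. (xs i)\<^sup>2)" by (rule sum_nonneg) simp
  have ss0: "0 \<le> (\<Sum>i\<le>n. (ss i)\<^sup>2)" by (rule sum_nonneg) simp
  have sq0: "0 \<le> sq" unfolding sq_def using sx0 ss0 by linarith
  have zsq: "sq \<le> \<zeta>^2"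
  proof -
    have "(sqrt sq)^2 \<le> \<zeta>^2"
      by (rule power_mono) (use zn sq0 in \<open>simp_all add: sq_def\<close>)
    moreover have "(sqrt sq)^2 = sq" by (rule real_sqrt_pow2[OF sq0])
    ultimately show ?thesis by linarith
  qed
  have zx: "\<forall>i\<le>n. xs i \<le> \<zeta>"
  proof (intro allI impI)
    fix i assume i: "i \<le> n"
    have "(xs i)^2 \<le> (\<Sum>i\<le>n. (xs i)\<^sup>2)" using i by (intro member_le_sum) auto
    then have "(xs i)^2 \<le> \<zeta>^2" using zsq ss0 unfolding sq_def by linarith
    then show "xs i \<le> \<zeta>" by (rule power2_le_imp_le) (use z0 in simp)
  qed
  have zs: "\<forall>i\<le>n. ss i \<le> \<zeta>"
  proof (intro allI impI)
    fix i assume i: "i \<le> n"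
    have "(ss i)^2 \<le> (\<Sum>i\<le>n. (ss i)\<^sup>2)" using i by (intro member_le_sum) auto
    then have "(ss i)^2 \<le> \<zeta>^2" using zsq sx0 unfolding sq_def by linarith
    then show "ss i \<le> \<zeta>" by (rule power2_le_imp_le) (use z0 in simp)
  qed
  have mu0: "mu n (x 0) (s 0) = \<zeta>^2" unfolding x0 s0 mu_def by (simp add: power2_eq_square)
  have al: "0 < \<alpha> k \<and> \<alpha> k \<le> 1" for k using Hso[of k] unfolding step_ok_def by blast
  define \<nu> where "\<nu> k = (\<Prod>j<k. 1 - \<alpha> j)" for k
  have nu01: "0 \<le> \<nu> k \<and> \<nu> k \<le> 1" for k
  proof -
    have "\<forall>j. 0 \<le> 1 - \<alpha> j \<and> 1 - \<alpha> j \<le> 1" using al by (simp add: less_imp_le)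
    then show ?thesis unfolding \<nu>_def by (auto intro!: prod_nonneg prod_le_1)
  qed
  have scal: "(\<forall>i\<le>n. rd n m Q q A (x k) (l k) (s k) i = \<nu> k * rd n m Q q A (x 0) (l 0) (s 0) i)
            \<and> (\<forall>j<m. rp n A (x k) j = \<nu> k * rp n A (x 0) j)" for k
  proof (induction k)
    case 0
    then show ?case unfolding \<nu>_def by simp
  next
    case (Suc k)
    note nd = Hnd[of k]
    note e = Hx[of k] Hl[of k] Hs[of k]
    have nus: "\<nu> (Suc k) = (1 - \<alpha> k) * \<nu> k" unfolding \<nu>_def by simp
    show ?case unfolding e nus using rd_step[OF nd] rp_step[OF nd] Suc by simp
  qed
  define R0 where "R0 = res_norm n m Q q A (x 0) (l 0) (s 0)"
  have R00: "R0 \<ge> 0" unfolding R0_def res_norm_def by (simp add: add_nonneg_nonneg sum_nonneg)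
  have resk: "res_norm n m Q q A (x k) (l k) (s k) = \<nu> k * R0" for k
  proof -
    have a: "(\<Sum>i\<le>n. (rd n m Q q A (x k) (l k) (s k) i)\<^sup>2) = (\<nu> k)^2 * (\<Sum>i\<le>n. (rd n m Q q A (x 0) (l 0) (s 0) i)\<^sup>2)"
      using scal[of k] by (simp add: sum_distrib_left power_mult_distrib)
    have b: "(\<Sum>j<m. (rp n A (x k) j)\<^sup>2) = (\<nu> k)^2 * (\<Sum>j<m. (rp n A (x 0) j)\<^sup>2)"
      using scal[of k] by (simp add: sum_distrib_left power_mult_distrib)
    show ?thesis unfolding res_norm_def R0_def a b using nu01[of k]
      by (simp add: distrib_left[symmetric] real_sqrt_mult)
  qed
  have nbk: "in_nbhd n m Q q A \<gamma> \<beta> (x 0) (l 0) (s 0) (x k) (l k) (s k)" for k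
  proof (cases k)
    case 0
    have "R0 / \<zeta>^2 \<le> \<beta> * R0 / \<zeta>^2"
    proof -
      have "R0 / \<zeta>^2 \<ge> 0" using R00 by simp
      then have "1 * (R0 / \<zeta>^2) \<le> \<beta> * (R0 / \<zeta>^2)" using b1 by (intro mult_right_mono) auto
      then show ?thesis by simp
    qed
    moreover have "\<gamma> * \<zeta>^2 \<le> \<zeta> * \<zeta>"
    proof -
      have "\<gamma> * \<zeta>^2 \<le> 1 * \<zeta>^2" using g1 by (intro mult_right_mono) auto
      then show ?thesis by (simp add: power2_eq_square)
    qed
    ultimately show ?thesis unfolding 0 in_nbhd_def mu0 R0_def[symmetric]
      using z0 by (simp add: x0 s0)
  next
    case (Suc j)
    note so = Hso[of j]
    note e = Hx[of j] Hl[of j] Hs[of j]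
    show ?thesis using so unfolding Suc e step_ok_def by blast
  qed
  have dec: "mu n (x (Suc k)) (s (Suc k)) \<le> (1 - 0.01*ab) * mu n (x k) (s k) \<and> ab \<le> 1" for k
  proof -
    note nd = Hnd[of k]
    have sk: "\<sigma>min \<le> \<sigma> k" "\<sigma> k \<le> 1/2" using Hs1[of k] Hs2[of k] sg by auto
    have pos: "\<forall>i\<le>n. x k i > 0 \<and> s k i > 0" using nbk[of k] unfolding in_nbhd_def by blast
    have mupos: "mu n (x k) (s k) > 0" unfolding mu_def using pos
      by (intro divide_pos_pos sum_pos) (auto intro: mult_pos_pos)
    obtain \<nu>' where nu': "0 \<le> \<nu>'" "\<nu>' \<le> 1"
      "\<forall>i\<le>n. rd n m Q q A (x k) (l k) (s k) i = \<nu>' * rd n m Q q A (\<lambda>i. \<zeta>) (\<lambda>j. 0) (\<lambda>i. \<zeta>) i"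
      "\<forall>j<m. rp n A (x k) j = \<nu>' * rp n A (\<lambda>i. \<zeta>) j"
      "\<nu>' * \<zeta>^2 \<le> \<beta> * mu n (x k) (s k)"
    proof (cases "R0 = 0")
      case True
      have s0: "(\<Sum>i\<le>n. (rd n m Q q A (x 0) (l 0) (s 0) i)\<^sup>2) + (\<Sum>j<m. (rp n A (x 0) j)\<^sup>2) = 0"
        using True unfolding R0_def res_norm_def by simp
      have "(\<Sum>i\<le>n. (rd n m Q q A (x 0) (l 0) (s 0) i)\<^sup>2) = 0" "(\<Sum>j<m. (rp n A (x 0) j)\<^sup>2) = 0"
        using s0 by (simp_all add: add_nonneg_eq_0_iff sum_nonneg)
      then have z1: "\<forall>i\<le>n. rd n m Q q A (x 0) (l 0) (s 0) i = 0" and z2: "\<forall>j<m. rp n A (x 0) j = 0"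
        by (simp_all add: sum_nonneg_eq_0_iff)
      show ?thesis
      proof (rule that[of 0])
        show "\<forall>i\<le>n. rd n m Q q A (x k) (l k) (s k) i = 0 * rd n m Q q A (\<lambda>i. \<zeta>) (\<lambda>j. 0) (\<lambda>i. \<zeta>) i"
          using scal[of k] z1 by simp
        show "\<forall>j<m. rp n A (x k) j = 0 * rp n A (\<lambda>i. \<zeta>) j" using scal[of k] z2 by simp
        show "0 * \<zeta>^2 \<le> \<beta> * mu n (x k) (s k)" using b1 mupos by simp
      qed simp_all
    next
      case False
      then have R0p: "R0 > 0" using R00 by simp
      have "\<nu> k * R0 / mu n (x k) (s k) \<le> \<beta> * R0 / \<zeta>^2"
      proof -
        have "res_norm n m Q q A (x k) (l k) (s k) / mu n (x k) (s k) \<le> \<beta> * res_norm n m Q q A (x 0) (l 0) (s 0) / mu n (x 0) (s 0)"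
          using nbk[of k] unfolding in_nbhd_def by (elim conjE)
        then show ?thesis unfolding resk[of k] mu0 R0_def[symmetric] .
      qed
      then have "\<nu> k * R0 / mu n (x k) (s k) * (mu n (x k) (s k) * \<zeta>^2) \<le> \<beta> * R0 / \<zeta>^2 * (mu n (x k) (s k) * \<zeta>^2)"
        using mupos z0 by (intro mult_right_mono) auto
      moreover have "\<nu> k * R0 / mu n (x k) (s k) * (mu n (x k) (s k) * \<zeta>^2) = \<nu> k * R0 * \<zeta>^2"
        using mupos by simp
      moreover have "\<beta> * R0 / \<zeta>^2 * (mu n (x k) (s k) * \<zeta>^2) = \<beta> * R0 * mu n (x k) (s k)"
        using z0 by simp
      ultimately have "\<nu> k * R0 * \<zeta>^2 \<le> \<beta> * R0 * mu n (x k) (s k)" by simp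
      then have "R0 * (\<nu> k * \<zeta>^2) \<le> R0 * (\<beta> * mu n (x k) (s k))" by (simp add: mult_ac)
      then have nb: "\<nu> k * \<zeta>^2 \<le> \<beta> * mu n (x k) (s k)" using R0p by simp
      show ?thesis
      proof (rule that[of "\<nu> k"])
        show "0 \<le> \<nu> k" "\<nu> k \<le> 1" using nu01[of k] by auto
        show "\<nu> k * \<zeta>^2 \<le> \<beta> * mu n (x k) (s k)" by (rule nb)
        show "\<forall>i\<le>n. rd n m Q q A (x k) (l k) (s k) i = \<nu> k * rd n m Q q A (\<lambda>i. \<zeta>) (\<lambda>j. 0) (\<lambda>i. \<zeta>) i"
          using scal[of k] unfolding x0 l0 s0 by blast
        show "\<forall>j<m. rp n A (x k) j = \<nu> k * rp n A (\<lambda>i. \<zeta>) j"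
          using scal[of k] unfolding x0 by blast
      qed
    qed
    have so: "step_ok n m Q q A \<gamma> \<beta> (x 0) (l 0) (s 0) (x k) (l k) (s k) (dx k) (dl k) (ds k) ab"
      unfolding ab_def
      by (rule one_step[OF sa opt zx zs g0 g1 b1 sg(1) sk nbk nu' nd])
    then have abk: "ab \<le> \<alpha> k" using Hmax[of k] by blast
    have "mu n (x (Suc k)) (s (Suc k)) \<le> (1 - 0.01 * \<alpha> k) * mu n (x k) (s k)"
    proof -
      note so = Hso[of k]
      note e = Hx[of k] Hs[of k]
      show ?thesis using so unfolding e step_ok_def by blast
    qed
    also have "\<dots> \<le> (1 - 0.01 * ab) * mu n (x k) (s k)"
      using abk mupos by (intro mult_right_mono) auto
    finally show ?thesis using abk al[of k] by simp
  qed
  have ab0: "ab \<ge> 0" unfolding ab_def using sg g0 g1 by simp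
  have "mu n (x k) (s k) \<le> (1 - 0.01*ab)^k * \<zeta>^2"
  proof (induction k)
    case 0 then show ?case using mu0 by simp
  next
    case (Suc k)
    have c: "1 - 0.01*ab \<ge> 0"
    proof -
      have "ab \<le> 1" using dec by blast
      then show ?thesis by simp
    qed
    have "mu n (x (Suc k)) (s (Suc k)) \<le> (1 - 0.01*ab) * mu n (x k) (s k)" using dec by blast
    also have "\<dots> \<le> (1 - 0.01*ab) * ((1 - 0.01*ab)^k * \<zeta>^2)" using Suc c by (intro mult_left_mono)
    finally show ?case by simp
  qed
  then show ?thesis unfolding ab_def .
qed

lemma final_arith:
  fixes c0 \<chi> \<kappa> \<epsilon> \<zeta> N :: real and k :: nat
  assumes c0: "0 < c0" "c0 \<le> 1/100" and chi: "\<chi> > 0" and ka: "\<kappa> > 0" and e: "\<epsilon> > 0" and z: "\<zeta> > 0"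
    and zb: "\<zeta>\<^sup>2 \<le> \<chi> / \<epsilon> powr \<kappa>" and N: "N \<ge> 1"
  shows "\<exists>K::nat. real K \<le> (1 + (\<bar>ln \<chi>\<bar> + 1 + \<kappa>)/c0) * N^2 * (1 + \<bar>ln \<epsilon>\<bar>) \<and>
           (\<forall>k\<ge>K. (1 - c0/N^2)^k * \<zeta>^2 \<le> \<epsilon>)"
proof -
  define \<delta> where "\<delta> = c0/N^2"
  have N2: "N^2 \<ge> 1" using N by (simp add: one_le_power)
  have d0: "\<delta> > 0" unfolding \<delta>_def using c0 N2 by (intro divide_pos_pos) auto
  have d1: "\<delta> \<le> 1"
  proof -
    have "c0/N^2 \<le> c0" using c0 N2 by (simp add: divide_le_eq mult_le_cancel_left1)
    then show ?thesis unfolding \<delta>_def using c0 by simp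
  qed
  define \<Lambda> where "\<Lambda> = ln (\<zeta>^2/\<epsilon>)"
  define K where "K = nat \<lceil>\<Lambda>/\<delta>\<rceil>"
  have KL: "real K \<ge> \<Lambda>/\<delta>" unfolding K_def by linarith
  have Kup: "real K \<le> max 0 (\<Lambda>/\<delta>) + 1" unfolding K_def by linarith
  have conv: "\<forall>k\<ge>K. (1 - \<delta>)^k * \<zeta>^2 \<le> \<epsilon>"
  proof (intro allI impI)
    fix k assume k: "K \<le> k"
    have "(1-\<delta>)^k \<le> (exp (-\<delta>))^k"
      by (rule power_mono) (use d1 exp_ge_add_one_self[of "-\<delta>"] in auto)
    also have "\<dots> = exp (- (\<delta> * real k))" by (simp add: exp_of_nat_mult[symmetric] mult.commute)
    also have "\<dots> \<le> exp (- \<Lambda>)"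
    proof -
      have "\<Lambda>/\<delta> \<le> real k" using KL k by simp
      then have "\<Lambda> \<le> \<delta> * real k" using d0 by (simp add: divide_le_eq mult.commute)
      then show ?thesis by simp
    qed
    also have "\<dots> = \<epsilon>/\<zeta>^2" unfolding \<Lambda>_def using e z by (simp add: exp_minus exp_ln)
    finally have "(1-\<delta>)^k * \<zeta>^2 \<le> \<epsilon>/\<zeta>^2 * \<zeta>^2" using z by (intro mult_right_mono) auto
    then show "(1 - \<delta>)^k * \<zeta>^2 \<le> \<epsilon>" using z by simp
  qed
  define a where "a = \<bar>ln \<chi>\<bar>"
  define t where "t = \<bar>ln \<epsilon>\<bar>"
  have Lb: "\<Lambda> \<le> a + (1+\<kappa>)*t"
  proof -
    have "ln (\<zeta>^2) \<le> ln (\<chi> / \<epsilon> powr \<kappa>)" using zb z chi e by (simp add: ln_mono)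
    also have "\<dots> = ln \<chi> - \<kappa> * ln \<epsilon>" using chi e by (simp add: ln_div ln_powr)
    finally have "\<Lambda> \<le> ln \<chi> - \<kappa> * ln \<epsilon> - ln \<epsilon>" unfolding \<Lambda>_def using z e by (simp add: ln_div)
    moreover have "ln \<chi> \<le> a" unfolding a_def by simp
    moreover have "- (\<kappa> * ln \<epsilon>) \<le> \<kappa> * t"
    proof -
      have "\<kappa> * (- ln \<epsilon>) \<le> \<kappa> * t" unfolding t_def using ka by (intro mult_left_mono) auto
      then show ?thesis by simp
    qed
    moreover have "- ln \<epsilon> \<le> t" unfolding t_def by simp
    ultimately show ?thesis by (simp add: algebra_simps)
  qed
  have a0: "a \<ge> 0" and t0: "t \<ge> 0" unfolding a_def t_def by simp_all
  have M: "max 0 (\<Lambda>/\<delta>) \<le> (a + (1+\<kappa>)*t) * N^2 / c0"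
  proof -
    have "\<Lambda>/\<delta> = \<Lambda> * N^2 / c0" unfolding \<delta>_def using c0 N2 by (simp add: field_simps)
    also have "\<dots> \<le> (a + (1+\<kappa>)*t) * N^2 / c0" using Lb c0 N2
      by (intro divide_right_mono mult_right_mono) auto
    finally show ?thesis using a0 t0 ka c0 by (simp add: add_nonneg_nonneg)
  qed
  have "real K \<le> 1 + (a + (1+\<kappa>)*t) * N^2 / c0" using Kup M by linarith
  also have "\<dots> \<le> (1 + (a + 1 + \<kappa>)/c0) * N^2 * (1 + t)"
  proof -
    have "1 * 1 \<le> N^2 * (1+t)" using N2 t0 by (intro mult_mono) auto
    then have "1 \<le> N^2 * (1+t)" by simp
    moreover have "(a + (1+\<kappa>)*t) \<le> (a + 1 + \<kappa>) * (1+t)" using a0 t0 ka by (simp add: algebra_simps)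
    then have "(a + (1+\<kappa>)*t) * N^2 / c0 \<le> (a + 1 + \<kappa>) * (1+t) * N^2 / c0" using c0 N2
      by (intro divide_right_mono mult_right_mono) auto
    moreover have "(1 + (a + 1 + \<kappa>)/c0) * N^2 * (1 + t) = N^2 * (1+t) + (a + 1 + \<kappa>) * (1+t) * N^2 / c0"
      by (simp add: algebra_simps)
    ultimately show ?thesis by argo
  qed
  finally show ?thesis using conv unfolding \<delta>_def a_def t_def by blast
qed

theorem theorem3:
  fixes \<chi> \<kappa> \<beta> \<gamma> \<sigma>min \<sigma>max :: real
  assumes "\<chi> > 0" and "\<kappa> > 0" and "\<beta> \<ge> 1" and "0 < \<gamma>" and "\<gamma> < 1"
    and "0 < \<sigma>min" and "\<sigma>min < \<sigma>max" and "\<sigma>max \<le> 1/2"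
  shows "\<exists>C::real. \<forall>(n::nat) (m::nat) Q q A xs ls ss (\<epsilon>::real) (\<zeta>::real) x l s.
     standing_assms n m Q A \<and>
     optimal_pd n m Q q A xs ls ss \<and>
     \<epsilon> > 0 \<and> \<zeta> > 0 \<and>
     sqrt ((\<Sum>i\<le>n. (xs i)\<^sup>2) + (\<Sum>i\<le>n. (ss i)\<^sup>2)) \<le> \<zeta> \<and>
     \<zeta>\<^sup>2 \<le> \<chi> / \<epsilon> powr \<kappa> \<and>
     x 0 = (\<lambda>i. \<zeta>) \<and> l 0 = (\<lambda>j. 0) \<and> s 0 = (\<lambda>i. \<zeta>) \<and>
     iipm_run n m Q q A \<beta> \<gamma> \<sigma>min \<sigma>max x l s
     \<longrightarrow> (\<exists>K::nat. real K \<le> C * real ((n + 1)\<^sup>2) * (1 + \<bar>ln \<epsilon>\<bar>) \<and>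
              (\<forall>k\<ge>K. mu n (x k) (s k) \<le> \<epsilon>))"
proof -
  note as = assms
  define c0 where "c0 = \<sigma>min*(1-\<gamma>)*\<gamma>/(10400*\<beta>^2)"
  have b2: "\<beta>^2 \<ge> 1" using as(3) by (simp add: one_le_power)
  have c0p: "c0 > 0" unfolding c0_def using as b2 by (intro divide_pos_pos mult_pos_pos) auto
  have c01: "c0 \<le> 1/100"
  proof -
    have "\<sigma>min*(1-\<gamma>)*\<gamma> \<le> 1*1*1" using as by (intro mult_mono) auto
    also have "\<dots> \<le> 10400*\<beta>^2/100" using b2 by simp
    finally have "\<sigma>min*(1-\<gamma>)*\<gamma> \<le> 10400*\<beta>^2/100" .
    then have "c0 \<le> (10400*\<beta>^2/100)/(10400*\<beta>^2)" unfolding c0_def using b2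
      by (intro divide_right_mono) auto
    also have "\<dots> = 1/100" using as(3) by simp
    finally show ?thesis .
  qed
  show ?thesis
  proof (rule exI[of _ "1 + (\<bar>ln \<chi>\<bar> + 1 + \<kappa>)/c0"], intro allI impI)
    fix n m Q q A xs ls ss \<epsilon> \<zeta> x l s
    assume H: "standing_assms n m Q A \<and>
     optimal_pd n m Q q A xs ls ss \<and>
     \<epsilon> > 0 \<and> \<zeta> > 0 \<and>
     sqrt ((\<Sum>i\<le>n. (xs i)\<^sup>2) + (\<Sum>i\<le>n. (ss i)\<^sup>2)) \<le> \<zeta> \<and>
     \<zeta>\<^sup>2 \<le> \<chi> / \<epsilon> powr \<kappa> \<and>
     x 0 = (\<lambda>i. \<zeta>) \<and> l 0 = (\<lambda>j. 0) \<and> s 0 = (\<lambda>i. \<zeta>) \<and>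
     iipm_run n m Q q A \<beta> \<gamma> \<sigma>min \<sigma>max x l s"
    define N where "N = real (n+1)"
    have N1: "N \<ge> 1" unfolding N_def by simp
    have fac: "0.01*(\<sigma>min*(1-\<gamma>)/(2*(52*\<beta>^2*(real(n+1))^2/\<gamma>))) = c0/N^2"
      unfolding c0_def N_def using as b2 by (simp add: field_simps)
    have dec: "mu n (x k) (s k) \<le> (1 - c0/N^2)^k * \<zeta>^2" for k
      using run_decay[of n m Q A q xs ls ss \<zeta> x l s \<beta> \<gamma> \<sigma>min \<sigma>max k] H as unfolding fac by blast
    obtain K :: nat where K: "real K \<le> (1 + (\<bar>ln \<chi>\<bar> + 1 + \<kappa>)/c0) * N^2 * (1 + \<bar>ln \<epsilon>\<bar>)"
      "\<forall>k\<ge>K. (1 - c0/N^2)^k * \<zeta>^2 \<le> \<epsilon>"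
      using final_arith[OF c0p c01 as(1) as(2) _ _ _ N1, of \<epsilon> \<zeta>] H by blast
    show "\<exists>K::nat. real K \<le> (1 + (\<bar>ln \<chi>\<bar> + 1 + \<kappa>)/c0) * real ((n + 1)\<^sup>2) * (1 + \<bar>ln \<epsilon>\<bar>) \<and>
              (\<forall>k\<ge>K. mu n (x k) (s k) \<le> \<epsilon>)"
    proof (rule exI[of _ K], intro conjI allI impI)
      show "real K \<le> (1 + (\<bar>ln \<chi>\<bar> + 1 + \<kappa>)/c0) * real ((n + 1)\<^sup>2) * (1 + \<bar>ln \<epsilon>\<bar>)"
        using K(1) unfolding N_def by (simp add: of_nat_power)
      fix k assume "K \<le> k"
      then show "mu n (x k) (s k) \<le> \<epsilon>" using dec[of k] K(2) by force
    qed
  qed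
qed

end
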